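(* Let $0\le a<b$, $0\le c<d$, $\alpha,\beta>0$, $H=[a,b]^n\times[c,d]^m$, and $S=\{(x,y)\in H\mid\prod_{i=1}^m y_i^\alpha\ge\prod_{j=1}^n x_j^\beta\}$. Let $k=\min\{m,\lfloor\beta/\alpha\rfloor\}$. For $i=0,\dots,m-k$ and $j=0,\dots,n-1$ let $S_{ij}=S\cap\{(x,y)\in H\mid y_r=d\ (r\le i),\ y_r=c\ (r\ge i+k+1),\ y_1\ge\dots\ge y_m,\ x_s=b\ (s\le j),\ x_s=a\ (s\ge j+2)\}$, and for $j=0,\dots,n$ let $C_j=S\cap\{(x,y)\in H\mid x_s=b\ (s\le j),\ x_s=a\ (s\ge j+1),\ y_1\ge\dots\ge y_m\}$. Let $T=\bigcup_{i,j}S_{ij}\cup\bigcup_jC_j$. Then $$\mathrm{conv}(S)=\{(x,y)\mid\exists(u,v):\ v\ge_m y,\ u\ge_m x,\ (u,v)\in\mathrm{conv}(T)\}.$$ Moreover, if $m\alpha\le\beta$, then $\mathrm{conv}(S)=\{(x,y)\in H\mid\prod_{i=1}^m y_i^{1/m}\ge\prod_{j=1}^n(u^{S(x)}_j)^{\beta/(m\alpha)}\}$.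
   Context: $v\ge_m y$ means $\sum_{i=1}^j v_{[i]}\ge\sum_{i=1}^j y_{[i]}$ for $j$ less than the dimension, with equality for the full sum ($v_{[i]}$ the $i$-th largest entry). For $x\in[a,b]^n$, $S(x)=\sum_{i=1}^n(x_i-a)$; for $s\in[0,n(b-a)]$, $i^s=\max\{i\in\{0,\dots,n\}\mid i(b-a)<s\}$ (with $i^0=0$), and $u^s\in\mathbb{R}^n$ is given by $u^s_i=b$ for $i\le i^s$, $u^s_{i^s+1}=a+s-(b-a)i^s$, $u^s_i=a$ for $i>i^s+1$. *)

theory Defs
  imports "HOL-Analysis.Analysis" "HOL-Library.Function_Algebras"
begin

text \<open>Real vector space structure on functions (pointwise), so that the library's
  convex hull can be used for points of R^n represented as functions nat => real
  (coordinates 1..n, zero elsewhere).\<close>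

instantiation "fun" :: (type, real_vector) real_vector
begin
definition scaleR_fun :: "real \<Rightarrow> ('a \<Rightarrow> 'b) \<Rightarrow> 'a \<Rightarrow> 'b" where
  "scaleR_fun r f = (\<lambda>x. r *\<^sub>R f x)"
instance
  by standard (auto simp: scaleR_fun_def fun_eq_iff scaleR_add_right scaleR_add_left)
end

definition isvec :: "nat \<Rightarrow> (nat \<Rightarrow> real) \<Rightarrow> bool" where
  "isvec n x \<longleftrightarrow> (\<forall>i. i \<notin> {1..n} \<longrightarrow> x i = 0)"

definition largest :: "nat \<Rightarrow> (nat \<Rightarrow> real) \<Rightarrow> nat \<Rightarrow> real" where
  "largest n v i = rev (sort (map v [1..<n+1])) ! (i - 1)"

definition majorizes :: "nat \<Rightarrow> (nat \<Rightarrow> real) \<Rightarrow> (nat \<Rightarrow> real) \<Rightarrow> bool" where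
  "majorizes n v y \<longleftrightarrow>
     (\<forall>j. 1 \<le> j \<and> j < n \<longrightarrow> (\<Sum>i=1..j. largest n v i) \<ge> (\<Sum>i=1..j. largest n y i)) \<and>
     (\<Sum>i=1..n. largest n v i) = (\<Sum>i=1..n. largest n y i)"

definition boxH :: "nat \<Rightarrow> nat \<Rightarrow> real \<Rightarrow> real \<Rightarrow> real \<Rightarrow> real \<Rightarrow>
    ((nat \<Rightarrow> real) \<times> (nat \<Rightarrow> real)) set" where
  "boxH n m a b c d = {(x, y). isvec n x \<and> isvec m y \<and>
      (\<forall>i\<in>{1..n}. a \<le> x i \<and> x i \<le> b) \<and> (\<forall>i\<in>{1..m}. c \<le> y i \<and> y i \<le> d)}"

definition setS :: "nat \<Rightarrow> nat \<Rightarrow> real \<Rightarrow> real \<Rightarrow> real \<Rightarrow> real \<Rightarrow> real \<Rightarrow> real \<Rightarrow>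
    ((nat \<Rightarrow> real) \<times> (nat \<Rightarrow> real)) set" where
  "setS n m a b c d \<alpha> \<beta> = {(x, y) \<in> boxH n m a b c d.
      (\<Prod>i=1..m. y i powr \<alpha>) \<ge> (\<Prod>j=1..n. x j powr \<beta>)}"

definition nonincr :: "nat \<Rightarrow> (nat \<Rightarrow> real) \<Rightarrow> bool" where
  "nonincr m y \<longleftrightarrow> (\<forall>r s. 1 \<le> r \<and> r \<le> s \<and> s \<le> m \<longrightarrow> y s \<le> y r)"

text \<open>S_ij (k is the parameter min{m, floor(beta/alpha)}).\<close>
definition setSij :: "nat \<Rightarrow> nat \<Rightarrow> real \<Rightarrow> real \<Rightarrow> real \<Rightarrow> real \<Rightarrow> real \<Rightarrow> real \<Rightarrow>
    nat \<Rightarrow> nat \<Rightarrow> nat \<Rightarrow> ((nat \<Rightarrow> real) \<times> (nat \<Rightarrow> real)) set" where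
  "setSij n m a b c d \<alpha> \<beta> k i j = setS n m a b c d \<alpha> \<beta> \<inter> {(x, y) \<in> boxH n m a b c d.
      (\<forall>r\<in>{1..m}. r \<le> i \<longrightarrow> y r = d) \<and> (\<forall>r\<in>{1..m}. r \<ge> i + k + 1 \<longrightarrow> y r = c) \<and>
      nonincr m y \<and>
      (\<forall>s\<in>{1..n}. s \<le> j \<longrightarrow> x s = b) \<and> (\<forall>s\<in>{1..n}. s \<ge> j + 2 \<longrightarrow> x s = a)}"

definition setC :: "nat \<Rightarrow> nat \<Rightarrow> real \<Rightarrow> real \<Rightarrow> real \<Rightarrow> real \<Rightarrow> real \<Rightarrow> real \<Rightarrow>
    nat \<Rightarrow> ((nat \<Rightarrow> real) \<times> (nat \<Rightarrow> real)) set" where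
  "setC n m a b c d \<alpha> \<beta> j = setS n m a b c d \<alpha> \<beta> \<inter> {(x, y) \<in> boxH n m a b c d.
      (\<forall>s\<in>{1..n}. s \<le> j \<longrightarrow> x s = b) \<and> (\<forall>s\<in>{1..n}. s \<ge> j + 1 \<longrightarrow> x s = a) \<and>
      nonincr m y}"

definition sumS :: "nat \<Rightarrow> real \<Rightarrow> (nat \<Rightarrow> real) \<Rightarrow> real" where
  "sumS n a x = (\<Sum>i=1..n. (x i - a))"

definition istar :: "nat \<Rightarrow> real \<Rightarrow> real \<Rightarrow> real \<Rightarrow> nat" where
  "istar n a b s = (if s = 0 then 0 else Max {i. i \<le> n \<and> real i * (b - a) < s})"

definition ustar :: "nat \<Rightarrow> real \<Rightarrow> real \<Rightarrow> real \<Rightarrow> nat \<Rightarrow> real" where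
  "ustar n a b s i =
     (if i \<le> istar n a b s then b
      else if i = istar n a b s + 1 then a + s - (b - a) * real (istar n a b s)
      else a)"

end

theory Submission
  imports Defs "HOL-Combinatorics.Permutations"
begin

declare upt_Suc[simp del]


definition psum :: "(nat \<Rightarrow> real) \<Rightarrow> nat \<Rightarrow> real" where
  "psum v j = (\<Sum>i=1..j. v i)"

definition sv :: "nat \<Rightarrow> (nat \<Rightarrow> real) \<Rightarrow> nat \<Rightarrow> real" where
  "sv n v i = (if i \<in> {1..n} then largest n v i else 0)"

definition perms :: "nat \<Rightarrow> (nat \<Rightarrow> real) \<Rightarrow> (nat \<Rightarrow> real) set" where
  "perms n v = {v \<circ> p | p. p permutes {1..n}}"

definition majs :: "nat \<Rightarrow> (nat \<Rightarrow> real) \<Rightarrow> (nat \<Rightarrow> real) \<Rightarrow> bool" where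
  "majs n u x \<longleftrightarrow> (\<forall>j. 1 \<le> j \<and> j < n \<longrightarrow> psum x j \<le> psum u j) \<and> psum x n = psum u n"

lemma largest_alt: "largest n v i = rev (sort (map v [1..<Suc n])) ! (i - 1)"
  by (simp add: largest_def)

lemma ivl_Suc: "{1..<Suc n} = {1..n}" "{Suc 0..<Suc n} = {1..n}" by auto

lemma rev_sort_sorted:
  assumes "nonincr n v"
  shows "rev (sort (map v [1..<Suc n])) = map v [1..<Suc n]"
proof -
  let ?l = "map v [1..<Suc n]"
  have "sorted (rev ?l)"
    unfolding sorted_iff_nth_mono
  proof (intro allI impI)
    fix i j assume ij: "i \<le> j" "j < length (rev ?l)"
    then show "rev ?l ! i \<le> rev ?l ! j"
    proof -
      have "n - Suc j \<le> n - Suc i" using ij by (simp add: diff_le_mono2)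
      then show ?thesis using ij
        assms[unfolded nonincr_def, rule_format, of "Suc (n - Suc j)" "Suc (n - Suc i)"]
        by (auto simp: rev_nth nth_upt)
    qed
  qed
  then have "sort ?l = rev ?l"
    by (intro properties_for_sort) auto
  then show ?thesis by simp
qed

lemma largest_sorted:
  assumes "nonincr n v" "i \<in> {1..n}"
  shows "largest n v i = v i"
proof -
  have "i - 1 < n" "Suc 0 + (i - 1) = i" using assms(2) by auto
  then show ?thesis
    unfolding largest_alt rev_sort_sorted[OF assms(1)] by (simp add: nth_upt)
qed

lemma largest_mset:
  assumes "mset (map u [1..<Suc n]) = mset (map v [1..<Suc n])"
  shows "largest n u = largest n v"
proof -
  have "sort (map u [1..<Suc n]) = sort (map v [1..<Suc n])"
    by (rule properties_for_sort) (use assms in auto)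
  then show ?thesis by (simp add: largest_alt fun_eq_iff)
qed

lemma mset_perm:
  assumes "p permutes {1..n}"
  shows "mset (map (v \<circ> p) [1..<Suc n]) = mset (map v [1..<Suc n])"
proof -
  have e: "{1..<n+1} = {1..n}" by auto
  have "mset (map (v \<circ> p) [1..<Suc n]) = image_mset v (image_mset p (mset_set {1..n}))"
    by (simp add: ivl_Suc flip: image_mset.comp)
  also have "\<dots> = image_mset v (mset_set {1..n})"
    using permutes_image_mset[OF assms] by simp
  finally show ?thesis by (simp add: ivl_Suc)
qed

lemma perm_exists:
  assumes "isvec n w" "isvec n v" "mset (map w [1..<Suc n]) = mset (map v [1..<Suc n])"
  shows "\<exists>p. p permutes {1..n} \<and> w = v \<circ> p"
proof -
  obtain q where q: "q permutes {..<length (map v [1..<Suc n])}"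
    "permute_list q (map v [1..<Suc n]) = map w [1..<Suc n]"
    using mset_eq_permutation[OF assms(3)] by blast
  have qn: "q permutes {..<n}" using q(1) by simp
  define p where "p i = (if i \<in> {1..n} then Suc (q (i - 1)) else i)" for i
  have b1: "bij_betw (\<lambda>i. i - 1) {1..n} {..<n}"
    by (rule bij_betw_byWitness[where f'=Suc]) auto
  have b2: "bij_betw q {..<n} {..<n}" using permutes_imp_bij[OF qn] .
  have b3: "bij_betw Suc {..<n} {1..n}"
    by (rule bij_betw_byWitness[where f'="\<lambda>i. i - 1"]) auto
  have "bij_betw (Suc \<circ> (q \<circ> (\<lambda>i. i - 1))) {1..n} {1..n}"
    by (rule bij_betw_trans[OF bij_betw_trans[OF b1 b2] b3])
  then have "bij_betw p {1..n} {1..n}"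
    by (rule bij_betw_cong[THEN iffD1, rotated]) (auto simp: p_def)
  then have pp: "p permutes {1..n}"
    by (rule bij_imp_permutes) (auto simp: p_def)
  have "w = v \<circ> p"
  proof
    fix i
    show "w i = (v \<circ> p) i"
    proof (cases "i \<in> {1..n}")
      case True
      then have i1: "i - 1 < n" by auto
      have "map w [1..<Suc n] ! (i - 1) = permute_list q (map v [1..<Suc n]) ! (i - 1)"
        using q(2) by simp
      also have "\<dots> = map v [1..<Suc n] ! q (i - 1)"
        using q(1) i1 by (simp add: permute_list_nth)
      finally show ?thesis
        using True i1 permutes_in_image[OF qn, of "i - 1"] by (auto simp: p_def nth_upt)
    next
      case False
      then show ?thesis using assms(1,2) by (auto simp: isvec_def p_def)
    qed
  qed
  then show ?thesis using pp by blast
qed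

lemma map_sv: "map (sv n v) [1..<Suc n] = rev (sort (map v [1..<Suc n]))"
  by (rule nth_equalityI) (auto simp: sv_def largest_alt nth_upt)

lemma isvec_sv: "isvec n (sv n v)"
  by (simp add: isvec_def sv_def)

lemma nonincr_sv: "nonincr n (sv n v)"
  unfolding nonincr_def
proof (intro allI impI)
  fix r s :: nat assume rs: "1 \<le> r \<and> r \<le> s \<and> s \<le> n"
  let ?l = "sort (map v [1..<Suc n])"
  have len: "length ?l = n" by simp
  have "?l ! (n - s) \<le> ?l ! (n - r)"
    by (rule sorted_nth_mono) (use rs in auto)
  moreover have "rev ?l ! (s - 1) = ?l ! (n - s)" "rev ?l ! (r - 1) = ?l ! (n - r)"
    using rs by (auto simp: rev_nth)
  ultimately show "sv n v s \<le> sv n v r"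
    using rs by (simp add: sv_def largest_alt)
qed

lemma sv_perm_exists:
  assumes "isvec n v"
  shows "\<exists>p. p permutes {1..n} \<and> sv n v = v \<circ> p"
  by (rule perm_exists[OF isvec_sv assms]) (unfold map_sv, simp)

lemma sv_comp_perm:
  assumes "p permutes {1..n}"
  shows "sv n (v \<circ> p) = sv n v"
  using largest_mset[OF mset_perm[OF assms]] by (simp add: sv_def fun_eq_iff)

lemma sv_sorted:
  assumes "isvec n v" "nonincr n v"
  shows "sv n v = v"
  using assms largest_sorted by (auto simp: sv_def isvec_def fun_eq_iff)

lemma sum_largest: "j \<le> n \<Longrightarrow> (\<Sum>i=1..j. largest n v i) = psum (sv n v) j"
  by (auto simp: psum_def sv_def intro!: sum.cong)

lemma sum_largest': "j \<le> n \<Longrightarrow> sum (largest n v) {Suc 0..j} = psum (sv n v) j"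
  using sum_largest[of j n v] by simp

lemma majorizes_iff: "majorizes n u x \<longleftrightarrow> majs n (sv n u) (sv n x)"
  by (auto simp: majorizes_def majs_def sum_largest')

lemma sum_subset_le:
  assumes "nonincr n w" "A \<subseteq> {1..n}" "card A = j" "j \<le> n"
  shows "sum w A \<le> psum w j"
proof (cases "j = 0")
  case True
  then have "A = {}" using assms by (metis card_eq_0_iff finite_atLeastAtMost finite_subset)
  then show ?thesis using True by (simp add: psum_def)
next
  case False
  define B where "B = {1..j}"
  have fA: "finite A" using assms(2) finite_subset by blast
  have sA: "sum w A = sum w (A \<inter> B) + sum w (A - B)"
    using fA by (rule sum.Int_Diff)
  have sB: "sum w B = sum w (A \<inter> B) + sum w (B - A)"
    using sum.Int_Diff[of B w A] by (simp add: B_def Int_commute)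
  have cAB: "card (A - B) = card (B - A)"
    using card_Diff_subset_Int[of A B] card_Diff_subset_Int[of B A] fA assms(3)
    by (simp add: B_def Int_commute)
  have "sum w (A - B) \<le> of_nat (card (A - B)) * w j"
  proof (rule sum_bounded_above)
    fix i assume "i \<in> A - B"
    then show "w i \<le> w j" using assms(1,2,4) False unfolding nonincr_def B_def by auto
  qed
  moreover have "of_nat (card (B - A)) * w j \<le> sum w (B - A)"
  proof (rule sum_bounded_below)
    fix i assume "i \<in> B - A"
    then show "w j \<le> w i" using assms(1,4) unfolding nonincr_def B_def by auto
  qed
  ultimately show ?thesis using sA sB cAB by (simp add: psum_def B_def)
qed

lemma psum_perm_le:
  assumes "nonincr n w" "p permutes {1..n}" "j \<le> n"
  shows "psum (w \<circ> p) j \<le> psum w j"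
proof -
  have inj: "inj_on p {1..j}" using permutes_inj[OF assms(2)] by (simp add: inj_on_def inj_def)
  have "psum (w \<circ> p) j = sum w (p ` {1..j})"
    unfolding psum_def by (subst sum.reindex[OF inj]) (simp add: comp_def)
  also have "\<dots> \<le> psum w j"
  proof (rule sum_subset_le[OF assms(1) _ _ assms(3)])
    show "p ` {1..j} \<subseteq> {1..n}" using permutes_image[OF assms(2)] assms(3) by auto
    show "card (p ` {1..j}) = j" using card_image[OF inj] by simp
  qed
  finally show ?thesis .
qed

lemma psum_perm_total:
  assumes "p permutes {1..n}"
  shows "psum (w \<circ> p) n = psum w n"
  using sum.permute[OF assms, of w] by (simp add: psum_def)


lemma scaleR_fun_app [simp]: "(r *\<^sub>R f) i = r * f i"
  by (simp add: scaleR_fun_def)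

lemma linear_comp: "linear (\<lambda>v::nat \<Rightarrow> real. v \<circ> q)"
  by (rule linearI) (auto simp: fun_eq_iff)

lemma perms_self: "u \<in> perms n u"
  unfolding perms_def by (rule CollectI, rule exI[of _ id]) auto

lemma perms_comp: "w \<in> perms n u \<Longrightarrow> q permutes {1..n} \<Longrightarrow> w \<circ> q \<in> perms n u"
  unfolding perms_def by (auto simp: comp_assoc intro: permutes_compose)

lemma perms_conv_closed:
  assumes "u' \<in> convex hull perms n u" "w \<in> perms n u'"
  shows "w \<in> convex hull perms n u"
proof -
  obtain q where q: "q permutes {1..n}" "w = u' \<circ> q" using assms(2) by (auto simp: perms_def)
  have "w \<in> (\<lambda>v. v \<circ> q) ` (convex hull perms n u)" using assms(1) q by auto
  also have "\<dots> = convex hull ((\<lambda>v. v \<circ> q) ` perms n u)"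
    by (rule convex_hull_linear_image[OF linear_comp])
  also have "\<dots> \<subseteq> convex hull perms n u"
    by (rule hull_mono) (use q(1) perms_comp in blast)
  finally show ?thesis .
qed

lemma conv_perms_trans:
  assumes "x \<in> convex hull perms n u'" "u' \<in> convex hull perms n u"
  shows "x \<in> convex hull perms n u"
proof -
  have "perms n u' \<subseteq> convex hull perms n u" using perms_conv_closed[OF assms(2)] by blast
  then have "convex hull perms n u' \<subseteq> convex hull perms n u"
    by (rule convex_hull_subset)
  then show ?thesis using assms(1) by blast
qed

lemma psum_Suc: "psum v (Suc p) = psum v p + v (Suc p)"
  by (simp add: psum_def)

lemma psum_diff: "psum u p - psum x p = (\<Sum>i=1..p. u i - x i)"
  by (simp add: psum_def sum_subtractf)

lemma psum_update:
  "psum (u(j := u j - \<delta>, k := u k + \<delta>)) p =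
     psum u p - (if 1 \<le> j \<and> j \<le> p then \<delta> else 0) + (if 1 \<le> k \<and> k \<le> p then \<delta> else 0)"
  if "j \<noteq> k"
proof -
  have "u(j := u j - \<delta>, k := u k + \<delta>) = (\<lambda>i. u i - (if i = j then \<delta> else 0) + (if i = k then \<delta> else 0))"
    using that by (auto simp: fun_eq_iff)
  then show ?thesis
    by (simp add: psum_def sum.distrib sum_subtractf sum.delta)
qed

lemma hlp_step:
  assumes xv: "isvec n x" and uv: "isvec n u" and xs: "nonincr n x" and us: "nonincr n u"
    and maj: "majs n u x" and ne: "\<exists>i\<in>{1..n}. x i \<noteq> u i"
  obtains u' where "isvec n u'" "nonincr n u'" "majs n u' x"
    "card {i\<in>{1..n}. x i \<noteq> u' i} < card {i\<in>{1..n}. x i \<noteq> u i}"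
    "u' \<in> convex hull perms n u"
proof -
  have ex_gt: "\<exists>i\<in>{1..n}. x i > u i"
  proof (rule ccontr)
    assume "\<not> ?thesis"
    then have le: "\<forall>i\<in>{1..n}. x i \<le> u i" by auto
    from ne obtain i0 where i0: "i0 \<in> {1..n}" "x i0 \<noteq> u i0" by auto
    then have "x i0 < u i0" using le by force
    then have "psum x n < psum u n"
      unfolding psum_def by (intro sum_strict_mono_ex1) (use le i0 in auto)
    then show False using maj by (simp add: majs_def)
  qed
  define k where "k = (LEAST k. k \<in> {1..n} \<and> x k > u k)"
  have "k \<in> {1..n} \<and> x k > u k"
    unfolding k_def by (rule LeastI_ex) (use ex_gt in blast)
  then have k: "k \<in> {1..n}" "x k > u k" by auto
  have below_k: "x i \<le> u i" if "1 \<le> i" "i < k" for i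
  proof (rule ccontr)
    assume "\<not> x i \<le> u i"
    then have "k \<le> i" unfolding k_def using that k by (intro Least_le) auto
    then show False using that by simp
  qed
  have pk: "psum x k \<le> psum u k"
    using maj k by (cases "k = n") (auto simp: majs_def)
  obtain k' where k': "k = Suc k'" using k by (cases k) auto
  have "psum u k - psum x k = (\<Sum>i=1..k'. u i - x i) + (u k - x k)"
    unfolding psum_diff k' by simp
  then have "(\<Sum>i=1..k'. u i - x i) > 0" using pk k by simp
  then have "\<exists>i\<in>{1..k'}. u i - x i > 0"
  proof (rule contrapos_pp)
    assume "\<not> (\<exists>i\<in>{1..k'}. u i - x i > 0)"
    then have "\<forall>i\<in>{1..k'}. u i - x i \<le> 0" by (simp add: not_less)
    then have "(\<Sum>i=1..k'. u i - x i) \<le> 0" by (intro sum_nonpos) blast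
    then show "\<not> (\<Sum>i=1..k'. u i - x i) > 0" by simp
  qed
  then have exj: "\<exists>i\<in>{1..k'}. u i > x i" by auto
  define J where "J = {i\<in>{1..k'}. u i > x i}"
  define j where "j = Max J"
  have fJ: "finite J" "J \<noteq> {}" using exj by (auto simp: J_def)
  have j: "j \<in> {1..k'}" "u j > x j" using Max_in[OF fJ] by (auto simp: j_def J_def)
  have jk: "j < k" using j k k' by auto
  have mid: "u i = x i" if "j < i" "i < k" for i
  proof -
    have "x i \<le> u i" using below_k that j by auto
    moreover have "\<not> u i > x i"
    proof
      assume "u i > x i"
      then have "i \<in> J" using that j k' by (auto simp: J_def)
      then have "i \<le> j" using Max_ge[OF fJ(1)] by (auto simp: j_def)
      then show False using that by simp
    qed
    ultimately show ?thesis by simp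
  qed
  define \<delta> where "\<delta> = min (u j - x j) (x k - u k)"
  have dpos: "\<delta> > 0" using j k by (simp add: \<delta>_def)
  have dle1: "\<delta> \<le> u j - x j" and dle2: "\<delta> \<le> x k - u k" by (simp_all add: \<delta>_def)
  have dcase: "\<delta> = u j - x j \<or> \<delta> = x k - u k" by (simp add: \<delta>_def min_def)
  define u' where "u' = u(j := u j - \<delta>, k := u k + \<delta>)"
  have jn: "j \<in> {1..n}" using j k k' by auto
  have xjk: "x k \<le> x j" using xs jn k jk unfolding nonincr_def by auto
  have ujk: "u k < u j" using xjk j k by simp
  have u'v: "isvec n u'" using uv jn k by (auto simp: isvec_def u'_def)
  have u's: "nonincr n u'"
    unfolding nonincr_def
  proof (intro allI impI)
    fix r s :: nat assume rs: "1 \<le> r \<and> r \<le> s \<and> s \<le> n"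
    have urs: "u s \<le> u r" using us rs unfolding nonincr_def by auto
    have xrs: "x s \<le> x r" using xs rs unfolding nonincr_def by auto
    have ukj: "u k + \<delta> \<le> u j - \<delta>" using xjk dle1 dle2 by linarith
    show "u' s \<le> u' r"
    proof (cases "r = s")
      case True then show ?thesis by simp
    next
      case rs': False
      show ?thesis
      proof (cases "s = k")
        case sk: True
        show ?thesis
        proof (cases "r = j")
          case True then show ?thesis using sk ukj jk by (simp add: u'_def)
        next
          case False
          have "r < k" using rs rs' sk by simp
          then have "x k \<le> x r" "x r \<le> u r" using xs rs below_k sk unfolding nonincr_def by auto
          then show ?thesis using sk False jk dle2 by (simp add: u'_def)
        qed
      next
        case sk: False
        show ?thesis
        proof (cases "r = j")
          case rj: True
          have "u s \<le> x j"
          proof (cases "s < k")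
            case True
            then have "u s = x s" using mid rs rs' rj by simp
            then show ?thesis using xs rs rj unfolding nonincr_def by auto
          next
            case False
            then have "k < s" using sk by simp
            then have "u s \<le> u k" using us rs k unfolding nonincr_def by auto
            then show ?thesis using k xjk by simp
          qed
          then show ?thesis using rj sk jk dle1 by (simp add: u'_def)
        next
          case rj: False
          have "u' s \<le> u s" using sk dpos by (simp add: u'_def)
          moreover have "u r \<le> u' r" using rj dpos jk by (simp add: u'_def)
          ultimately show ?thesis using urs by simp
        qed
      qed
    qed
  qed
  have u'maj: "majs n u' x"
    unfolding majs_def
  proof (intro conjI allI impI)
    have jkne: "j \<noteq> k" using jk by simp
    have pu': "psum u' p = psum u p - (if j \<le> p then \<delta> else 0) + (if k \<le> p then \<delta> else 0)" for p
      using psum_update[OF jkne, of u \<delta> p] j k by (simp add: u'_def)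
    have key: "psum x p \<le> psum u' p" if "p \<le> n" for p
    proof (cases "j \<le> p \<and> p < k")
      case True
      have "u j - x j \<le> (\<Sum>i=1..p. u i - x i)"
      proof (rule member_le_sum)
        show "j \<in> {1..p}" using True j by auto
        show "0 \<le> u i - x i" if "i \<in> {1..p} - {j}" for i using below_k[of i] that True by auto
      qed simp
      then have "\<delta> \<le> psum u p - psum x p" using dle1 by (simp add: psum_diff)
      then show ?thesis using pu'[of p] True by simp
    next
      case False
      have "psum x p \<le> psum u p"
        using maj that by (cases "p = 0") (auto simp: majs_def psum_def, cases "p = n", auto)
      then show ?thesis using pu'[of p] False jk by auto
    qed
    fix p assume "1 \<le> p \<and> p < n" then show "psum x p \<le> psum u' p" using key by simp
  next
    have "psum u' n = psum u n" using psum_update[of j k u \<delta> n] jk j k by (simp add: u'_def)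
    then show "psum x n = psum u' n" using maj by (simp add: majs_def)
  qed
  have card_lt: "card {i\<in>{1..n}. x i \<noteq> u' i} < card {i\<in>{1..n}. x i \<noteq> u i}"
  proof (rule psubset_card_mono)
    show "finite {i\<in>{1..n}. x i \<noteq> u i}" by simp
    have sub: "{i\<in>{1..n}. x i \<noteq> u' i} \<subseteq> {i\<in>{1..n}. x i \<noteq> u i}"
      using j k jk by (auto simp: u'_def)
    have "j \<notin> {i\<in>{1..n}. x i \<noteq> u' i} \<or> k \<notin> {i\<in>{1..n}. x i \<noteq> u' i}"
      using jk dcase by (auto simp: u'_def)
    moreover have "j \<in> {i\<in>{1..n}. x i \<noteq> u i}" "k \<in> {i\<in>{1..n}. x i \<noteq> u i}" using j k jn by auto
    ultimately show "{i\<in>{1..n}. x i \<noteq> u' i} \<subset> {i\<in>{1..n}. x i \<noteq> u i}" using sub by blast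
  qed
  define lam where "lam = \<delta> / (u j - u k)"
  have lam: "0 \<le> lam" "lam \<le> 1"
    using dpos ujk xjk dle1 dle2 by (auto simp: lam_def field_simps)
  have tp: "Transposition.transpose j k permutes {1..n}" using jn k by (intro permutes_swap_id) auto
  have "u' = (1 - lam) *\<^sub>R u + lam *\<^sub>R (u \<circ> Transposition.transpose j k)"
  proof
    fix i
    have d: "u j - u k \<noteq> 0" using ujk by simp
    have ld: "lam * (u j - u k) = \<delta>" using d by (simp add: lam_def)
    show "u' i = ((1 - lam) *\<^sub>R u + lam *\<^sub>R (u \<circ> Transposition.transpose j k)) i"
    proof (cases "i = j")
      case True
      then have "u' i = u j - \<delta>" using jk by (simp add: u'_def)
      moreover have "((1 - lam) *\<^sub>R u + lam *\<^sub>R (u \<circ> Transposition.transpose j k)) i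
          = u j - lam * (u j - u k)" using True by (simp add: algebra_simps)
      ultimately show ?thesis using ld by simp
    next
      case False
      show ?thesis
      proof (cases "i = k")
        case True
        then have "u' i = u k + \<delta>" by (simp add: u'_def)
        moreover have "((1 - lam) *\<^sub>R u + lam *\<^sub>R (u \<circ> Transposition.transpose j k)) i
            = u k + lam * (u j - u k)" using True by (simp add: algebra_simps)
        ultimately show ?thesis using ld by simp
      next
        case False
        then show ?thesis using \<open>i \<noteq> j\<close> by (simp add: u'_def algebra_simps)
      qed
    qed
  qed
  moreover have "u \<in> convex hull perms n u" by (rule hull_inc[OF perms_self])
  moreover have "u \<circ> Transposition.transpose j k \<in> convex hull perms n u"
    by (rule hull_inc) (use tp perms_comp[OF perms_self] in blast)
  ultimately have "u' \<in> convex hull perms n u"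
    using convexD_alt[OF convex_convex_hull] lam by metis
  then show ?thesis using that u'v u's u'maj card_lt by blast
qed

lemma hlp_sorted:
  assumes "isvec n x" "isvec n u" "nonincr n x" "nonincr n u" "majs n u x"
  shows "x \<in> convex hull perms n u"
  using assms
proof (induction "card {i\<in>{1..n}. x i \<noteq> u i}" arbitrary: u rule: less_induct)
  case less
  show ?case
  proof (cases "\<exists>i\<in>{1..n}. x i \<noteq> u i")
    case False
    then have "x = u" using less.prems(1,2) by (auto simp: isvec_def fun_eq_iff)
    then show ?thesis using hull_inc[OF perms_self] by simp
  next
    case True
    obtain u' where u': "isvec n u'" "nonincr n u'" "majs n u' x"
      "card {i\<in>{1..n}. x i \<noteq> u' i} < card {i\<in>{1..n}. x i \<noteq> u i}"
      "u' \<in> convex hull perms n u"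
      using hlp_step[OF less.prems True] by blast
    have "x \<in> convex hull perms n u'"
      using less.hyps[OF u'(4) less.prems(1) u'(1) less.prems(3) u'(2) u'(3)] .
    then show ?thesis using conv_perms_trans u'(5) by blast
  qed
qed


lemma hlp:
  assumes "isvec n x" "isvec n u" "majorizes n u x"
  shows "x \<in> convex hull perms n u"
proof -
  obtain p where p: "p permutes {1..n}" "sv n x = x \<circ> p" using sv_perm_exists[OF assms(1)] by blast
  obtain q where q: "q permutes {1..n}" "sv n u = u \<circ> q" using sv_perm_exists[OF assms(2)] by blast
  have "sv n x \<in> convex hull perms n (sv n u)"
    by (rule hlp_sorted[OF isvec_sv isvec_sv nonincr_sv nonincr_sv])
      (use assms(3) in \<open>simp add: majorizes_iff\<close>)
  moreover have "sv n u \<in> convex hull perms n u"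
    by (rule hull_inc) (use q in \<open>auto simp: perms_def\<close>)
  ultimately have sx: "sv n x \<in> convex hull perms n u" by (rule conv_perms_trans)
  have "x = sv n x \<circ> inv p"
    using p permutes_inv_o(1)[OF p(1)] by (simp add: comp_assoc)
  then have "x \<in> perms n (sv n x)"
    using permutes_inv[OF p(1)] by (auto simp: perms_def)
  then show ?thesis by (rule perms_conv_closed[OF sx])
qed

lemma psum_lin: "psum (a *\<^sub>R u + b *\<^sub>R v) j = a * psum u j + b * psum v j"
  by (simp add: psum_def sum.distrib sum_distrib_left)

lemma psum_comp_perm_le:
  assumes "isvec n x" "p permutes {1..n}" "j \<le> n"
  shows "psum (x \<circ> p) j \<le> psum (sv n x) j"
proof -
  obtain q where q: "q permutes {1..n}" "sv n x = x \<circ> q" using sv_perm_exists[OF assms(1)] by blast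
  have e: "q \<circ> (inv q \<circ> p) = p"
    by (simp add: comp_assoc[symmetric] permutes_inv_o(1)[OF q(1)])
  have "x \<circ> p = sv n x \<circ> (inv q \<circ> p)"
    by (simp add: q(2) comp_assoc e)
  moreover have "inv q \<circ> p permutes {1..n}"
    by (intro permutes_compose permutes_inv assms q)
  ultimately show ?thesis using psum_perm_le[OF nonincr_sv _ assms(3)] by metis
qed

lemma psum_comp_perm_total:
  assumes "isvec n x" "p permutes {1..n}"
  shows "psum (x \<circ> p) n = psum (sv n x) n"
proof -
  obtain q where q: "q permutes {1..n}" "sv n x = x \<circ> q" using sv_perm_exists[OF assms(1)] by blast
  show ?thesis using psum_perm_total[OF assms(2), of x] psum_perm_total[OF q(1), of x] q(2) by simp
qed

lemma nonincr_comb: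
  assumes "nonincr n u1" "nonincr n u2" "0 \<le> a" "0 \<le> b"
  shows "nonincr n (a *\<^sub>R u1 + b *\<^sub>R u2)"
  using assms unfolding nonincr_def
  by (auto intro!: add_mono mult_left_mono)

lemma isvec_comb: "isvec n u1 \<Longrightarrow> isvec n u2 \<Longrightarrow> isvec n (a *\<^sub>R u1 + b *\<^sub>R u2)"
  by (auto simp: isvec_def)

lemma maj_convex:
  assumes "nonincr n u1" "nonincr n u2" "isvec n u1" "isvec n u2" "isvec n x1" "isvec n x2"
    "majorizes n u1 x1" "majorizes n u2 x2" "0 \<le> a" "0 \<le> b" "a + b = 1"
  shows "majorizes n (a *\<^sub>R u1 + b *\<^sub>R u2) (a *\<^sub>R x1 + b *\<^sub>R x2)"
proof -
  let ?u = "a *\<^sub>R u1 + b *\<^sub>R u2" and ?x = "a *\<^sub>R x1 + b *\<^sub>R x2"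
  have su: "sv n ?u = ?u"
    by (rule sv_sorted[OF isvec_comb[OF assms(3,4)] nonincr_comb[OF assms(1,2,9,10)]])
  have s1: "sv n u1 = u1" by (rule sv_sorted[OF assms(3,1)])
  have s2: "sv n u2 = u2" by (rule sv_sorted[OF assms(4,2)])
  obtain p where p: "p permutes {1..n}" "sv n ?x = ?x \<circ> p"
    using sv_perm_exists[OF isvec_comb[OF assms(5,6)]] by blast
  have xp: "?x \<circ> p = a *\<^sub>R (x1 \<circ> p) + b *\<^sub>R (x2 \<circ> p)" by (auto simp: fun_eq_iff)
  have m1: "majs n u1 (sv n x1)" and m2: "majs n u2 (sv n x2)"
    using assms(7,8) s1 s2 by (simp_all add: majorizes_iff)
  show ?thesis
    unfolding majorizes_iff majs_def su p(2) xp psum_lin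
  proof (intro conjI allI impI)
    fix j assume j: "1 \<le> j \<and> j < n"
    have "psum (x1 \<circ> p) j \<le> psum u1 j"
      using psum_comp_perm_le[OF assms(5) p(1), of j] m1 j by (auto simp: majs_def)
    moreover have "psum (x2 \<circ> p) j \<le> psum u2 j"
      using psum_comp_perm_le[OF assms(6) p(1), of j] m2 j by (auto simp: majs_def)
    ultimately show "a * psum (x1 \<circ> p) j + b * psum (x2 \<circ> p) j \<le> a * psum u1 j + b * psum u2 j"
      using assms(9,10) by (intro add_mono mult_left_mono)
  next
    show "a * psum (x1 \<circ> p) n + b * psum (x2 \<circ> p) n = a * psum u1 n + b * psum u2 n"
      using psum_comp_perm_total[OF assms(5) p(1)] psum_comp_perm_total[OF assms(6) p(1)] m1 m2
      by (simp add: majs_def)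
  qed
qed

lemma setS_perm:
  assumes "(x, y) \<in> setS n m a b c d \<alpha> \<beta>" "p permutes {1..n}" "q permutes {1..m}"
  shows "(x \<circ> p, y \<circ> q) \<in> setS n m a b c d \<alpha> \<beta>"
proof -
  have pin: "\<And>i. i \<in> {1..n} \<Longrightarrow> p i \<in> {1..n}" using permutes_in_image[OF assms(2)] by blast
  have qin: "\<And>i. i \<in> {1..m} \<Longrightarrow> q i \<in> {1..m}" using permutes_in_image[OF assms(3)] by blast
  have pout: "\<And>i. i \<notin> {1..n} \<Longrightarrow> p i = i" using assms(2) by (simp add: permutes_not_in)
  have qout: "\<And>i. i \<notin> {1..m} \<Longrightarrow> q i = i" using assms(3) by (simp add: permutes_not_in)
  have px: "(\<Prod>j=1..n. (x \<circ> p) j powr \<beta>) = (\<Prod>j=1..n. x j powr \<beta>)"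
    using prod.permute[OF assms(2), of "\<lambda>j. x j powr \<beta>"] by (simp add: comp_def)
  have py: "(\<Prod>i=1..m. (y \<circ> q) i powr \<alpha>) = (\<Prod>i=1..m. y i powr \<alpha>)"
    using prod.permute[OF assms(3), of "\<lambda>i. y i powr \<alpha>"] by (simp add: comp_def)
  show ?thesis
    using assms(1) pin qin pout qout px py
    by (auto simp: setS_def boxH_def isvec_def)
qed

lemma linear_pair_comp: "linear (\<lambda>z::(nat \<Rightarrow> real) \<times> (nat \<Rightarrow> real). (fst z \<circ> p, snd z \<circ> q))"
  by (rule linearI) (auto simp: fun_eq_iff)

lemma conv_setS_perm:
  assumes "(u, v) \<in> convex hull setS n m a b c d \<alpha> \<beta>" "p permutes {1..n}" "q permutes {1..m}"
  shows "(u \<circ> p, v \<circ> q) \<in> convex hull setS n m a b c d \<alpha> \<beta>"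
proof -
  let ?L = "\<lambda>z::(nat \<Rightarrow> real) \<times> (nat \<Rightarrow> real). (fst z \<circ> p, snd z \<circ> q)"
  have "(u \<circ> p, v \<circ> q) \<in> ?L ` (convex hull setS n m a b c d \<alpha> \<beta>)"
    using assms(1) by force
  also have "\<dots> = convex hull (?L ` setS n m a b c d \<alpha> \<beta>)"
    by (rule convex_hull_linear_image[OF linear_pair_comp])
  also have "\<dots> \<subseteq> convex hull setS n m a b c d \<alpha> \<beta>"
    by (rule hull_mono) (use setS_perm assms(2,3) in force)
  finally show ?thesis .
qed

lemma rhs_sub_conv:
  assumes T: "T \<subseteq> setS n m a b c d \<alpha> \<beta>"
    and xv: "isvec n x" and yv: "isvec m y" and uv: "isvec n u" and vv: "isvec m v"
    and mx: "majorizes n u x" and my: "majorizes m v y" and uvT: "(u, v) \<in> convex hull T"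
  shows "(x, y) \<in> convex hull setS n m a b c d \<alpha> \<beta>"
proof -
  have uvS: "(u, v) \<in> convex hull setS n m a b c d \<alpha> \<beta>"
    using uvT hull_mono[OF T] by blast
  have sub: "perms n u \<times> perms m v \<subseteq> convex hull setS n m a b c d \<alpha> \<beta>"
    using conv_setS_perm[OF uvS] by (auto simp: perms_def)
  have "(x, y) \<in> (convex hull perms n u) \<times> (convex hull perms m v)"
    using hlp[OF xv uv mx] hlp[OF yv vv my] by simp
  also have "\<dots> = convex hull (perms n u \<times> perms m v)" by (simp add: convex_hull_Times)
  also have "\<dots> \<subseteq> convex hull setS n m a b c d \<alpha> \<beta>"
    using convex_hull_subset[OF sub] .
  finally show ?thesis .
qed


definition inbox :: "nat \<Rightarrow> real \<Rightarrow> real \<Rightarrow> (nat \<Rightarrow> real) \<Rightarrow> bool" where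
  "inbox n a b x \<longleftrightarrow> (\<forall>i\<in>{1..n}. a \<le> x i \<and> x i \<le> b)"

definition shape :: "nat \<Rightarrow> real \<Rightarrow> real \<Rightarrow> (nat \<Rightarrow> real) \<Rightarrow> nat \<Rightarrow> bool" where
  "shape n a b x J \<longleftrightarrow> J < n \<and> (\<forall>i\<in>{1..n}. i \<le> J \<longrightarrow> x i = b) \<and> (\<forall>i\<in>{1..n}. J + 2 \<le> i \<longrightarrow> x i = a)"

lemma prefix_set:
  assumes "D \<subseteq> {1..n}" "\<And>i r. i \<in> D \<Longrightarrow> 1 \<le> r \<Longrightarrow> r \<le> i \<Longrightarrow> r \<in> D"
  shows "D = {1..card D}"
proof (cases "D = {}")
  case True then show ?thesis by simp
next
  case False
  have fD: "finite D" using assms(1) finite_subset by blast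
  define M where "M = Max D"
  have M: "M \<in> D" using Max_in[OF fD False] by (simp add: M_def)
  have "D = {1..M}"
  proof
    show "D \<subseteq> {1..M}" using assms(1) Max_ge[OF fD] by (auto simp: M_def)
    show "{1..M} \<subseteq> D" using assms(2)[OF M] by auto
  qed
  then show ?thesis by simp
qed

lemma majs_refl: "majs n x x" by (simp add: majs_def)

lemma majs_trans: "majs n u v \<Longrightarrow> majs n v w \<Longrightarrow> majs n u w"
  by (auto simp: majs_def) (meson order_trans)

lemma two_le_card:
  assumes "finite A" "p \<in> A" "q \<in> A" "p \<noteq> q"
  shows "2 \<le> card A"
proof -
  have "card {p, q} \<le> card A" using assms by (intro card_mono) auto
  then show ?thesis using assms(4) by simp
qed

lemma xmove:
  assumes "isvec n x" "nonincr n x" "inbox n a b x" "0 \<le> a" "a < b" "1 \<le> n"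
  shows "\<exists>x'. isvec n x' \<and> nonincr n x' \<and> inbox n a b x' \<and> (\<exists>J. shape n a b x' J) \<and>
              majs n x' x \<and> prod x' {1..n} \<le> prod x {1..n}"
  using assms(1-3)
proof (induction "card {i\<in>{1..n}. a < x i \<and> x i < b}" arbitrary: x rule: less_induct)
  case less
  let ?I = "{i\<in>{1..n}. a < x i \<and> x i < b}"
  have xs: "x s \<le> x r" if "1 \<le> r" "r \<le> s" "s \<le> n" for r s
    using less.prems(2) that unfolding nonincr_def by auto
  have xb: "a \<le> x i \<and> x i \<le> b" if "i \<in> {1..n}" for i
    using less.prems(3) that unfolding inbox_def by auto
  show ?case
  proof (cases "card ?I \<le> 1")
    case True
    define D where "D = {i\<in>{1..n}. x i = b}"
    have D: "D = {1..card D}"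
    proof (rule prefix_set)
      show "D \<subseteq> {1..n}" by (auto simp: D_def)
      fix i r assume "i \<in> D" "1 \<le> r" "r \<le> i"
      then show "r \<in> D" using xs[of r i] xb[of r] by (auto simp: D_def)
    qed
    have "card D \<le> card {1..n}" by (rule card_mono) (auto simp: D_def)
    then have cD: "card D \<le> n" by simp
    have inD: "x i = b \<longleftrightarrow> i \<le> card D" if "i \<in> {1..n}" for i
    proof -
      have "x i = b \<longleftrightarrow> i \<in> D" using that by (simp add: D_def)
      also have "\<dots> \<longleftrightarrow> i \<le> card D" using that by (subst D) auto
      finally show ?thesis .
    qed
    have "\<exists>J. shape n a b x J"
    proof (cases "card D = n")
      case True
      show ?thesis
        by (rule exI[of _ "n - 1"]) (use assms(6) inD True in \<open>auto simp: shape_def\<close>)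
    next
      case False
      then have Jn: "card D < n" using cD by simp
      have "x i = a" if i: "i \<in> {1..n}" "card D + 2 \<le> i" for i
      proof (rule ccontr)
        assume "x i \<noteq> a"
        then have xi: "a < x i" "x i < b" using xb[OF i(1)] inD[OF i(1)] i(2) by auto
        have j1: "card D + 1 \<in> {1..n}" using Jn by auto
        have "x (card D + 1) < b" using inD[OF j1] xb[OF j1] by auto
        moreover have "x i \<le> x (card D + 1)" using xs[of "card D + 1" i] i by auto
        ultimately have m1: "card D + 1 \<in> ?I" and m2: "i \<in> ?I" using xi j1 i by auto
        have ne: "card D + 1 \<noteq> i" using i by simp
        have "2 \<le> card ?I" using two_le_card[OF _ m1 m2 ne] by simp
        then show False using True by simp
      qed
      then show ?thesis using Jn inD by (auto simp: shape_def intro!: exI[of _ "card D"])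
    qed
    then show ?thesis using less.prems by (intro exI[of _ x]) (auto simp: majs_refl)
  next
    case False
    have fI: "finite ?I" by simp
    have neI: "?I \<noteq> {}"
    proof
      assume e: "?I = {}"
      have "card ?I = 0" unfolding e by simp
      then show False using False by linarith
    qed
    define p where "p = Min ?I"
    define q where "q = Max ?I"
    have p: "p \<in> ?I" using Min_in[OF fI neI] by (simp add: p_def)
    have q: "q \<in> ?I" using Max_in[OF fI neI] by (simp add: q_def)
    have pq: "p < q"
    proof (rule ccontr)
      assume "\<not> p < q"
      have "p \<le> q" using Min_le[OF fI q] by (simp add: p_def)
      then have "p = q" using \<open>\<not> p < q\<close> by simp
      have "?I \<subseteq> {p}"
      proof
        fix i assume i: "i \<in> ?I"
        have "p \<le> i" using Min_le[OF fI i] by (simp add: p_def)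
        moreover have "i \<le> q" using Max_ge[OF fI i] by (simp add: q_def)
        ultimately show "i \<in> {p}" using \<open>p = q\<close> by simp
      qed
      then have "card ?I \<le> 1" using card_mono[of "{p}" ?I] by simp
      then show False using False by simp
    qed
    have before_p: "x i = b" if "i \<in> {1..n}" "i < p" for i
    proof -
      have "i \<notin> ?I"
      proof
        assume "i \<in> ?I"
        then have "p \<le> i" using Min_le[OF fI] by (simp add: p_def)
        then show False using that by simp
      qed
      moreover have "x p \<le> x i" using xs[of i p] that p by auto
      ultimately show ?thesis using that xb[of i] p by auto
    qed
    have after_q: "x i = a" if "i \<in> {1..n}" "q < i" for i
    proof -
      have "i \<notin> ?I"
      proof
        assume "i \<in> ?I"
        then have "i \<le> q" using Max_ge[OF fI] by (simp add: q_def)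
        then show False using that by simp
      qed
      moreover have "x i \<le> x q" using xs[of q i] that q by auto
      ultimately show ?thesis using that xb[of i] q by auto
    qed
    define \<delta> where "\<delta> = min (b - x p) (x q - a)"
    have dpos: "\<delta> > 0" using p q by (simp add: \<delta>_def)
    have dle1: "\<delta> \<le> b - x p" and dle2: "\<delta> \<le> x q - a" by (simp_all add: \<delta>_def)
    have dcase: "\<delta> = b - x p \<or> \<delta> = x q - a" by (simp add: \<delta>_def min_def)
    define x' where "x' = x(q := x q - \<delta>, p := x p + \<delta>)"
    have pn: "p \<in> {1..n}" and qn: "q \<in> {1..n}" using p q by auto
    have xqp: "x q \<le> x p" using xs[of p q] pn qn pq by auto
    have x'v: "isvec n x'" using less.prems(1) pn qn by (auto simp: isvec_def x'_def)
    have x'b: "inbox n a b x'"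
      using xb dle1 dle2 dpos pn qn xqp by (auto simp: inbox_def x'_def)
    have x's: "nonincr n x'"
      unfolding nonincr_def
    proof (intro allI impI)
      fix r s :: nat assume rs: "1 \<le> r \<and> r \<le> s \<and> s \<le> n"
      have xrs: "x s \<le> x r" using xs rs by auto
      show "x' s \<le> x' r"
      proof (cases "r = s")
        case True then show ?thesis by simp
      next
        case rs': False
        show ?thesis
        proof (cases "s = p")
          case True
          then have rp: "r < p" using rs rs' by simp
          then have "x r = b" using before_p[of r] rs by auto
          moreover have "x' r = x r" using rp pq by (auto simp: x'_def)
          moreover have "x' s = x p + \<delta>" using True by (simp add: x'_def)
          ultimately show ?thesis using dle1 by simp
        next
          case sp: False
          show ?thesis
          proof (cases "r = q")
            case True
            then have qs: "q < s" using rs rs' by simp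
            then have "x s = a" using after_q[of s] rs by auto
            moreover have "x' s = x s" using qs pq by (auto simp: x'_def)
            moreover have "x' r = x q - \<delta>" using True pq by (simp add: x'_def)
            ultimately show ?thesis using dle2 by simp
          next
            case rq: False
            have "x' s \<le> x s" using sp dpos by (auto simp: x'_def)
            moreover have "x r \<le> x' r" using rq dpos pq by (auto simp: x'_def)
            ultimately show ?thesis using xrs by simp
          qed
        qed
      qed
    qed
    have x'maj: "majs n x' x"
    proof -
      have qp: "q \<noteq> p" using pq by simp
      have x'e: "x' = x(q := x q - \<delta>, p := x p + \<delta>)" by (simp add: x'_def)
      have ps: "psum x' j = psum x j - (if 1 \<le> q \<and> q \<le> j then \<delta> else 0) + (if 1 \<le> p \<and> p \<le> j then \<delta> else 0)" for j
        unfolding x'e by (rule psum_update[OF qp])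
      show ?thesis
        unfolding majs_def ps using pq pn qn dpos by auto
    qed
    have x'prod: "prod x' {1..n} \<le> prod x {1..n}"
    proof -
      have fin: "finite {1..n}" by simp
      have qin: "q \<in> {1..n} - {p}" using qn pq by auto
      have e1: "prod f {1..n} = f p * (f q * prod f ({1..n} - {p} - {q}))" for f :: "nat \<Rightarrow> real"
        using prod.remove[OF fin pn, of f] prod.remove[of "{1..n} - {p}" q f] qin by simp
      have rest: "prod x' ({1..n} - {p} - {q}) = prod x ({1..n} - {p} - {q})"
        by (rule prod.cong) (auto simp: x'_def)
      have rnn: "0 \<le> prod x ({1..n} - {p} - {q})"
        using xb assms(4) by (intro prod_nonneg) force
      have "x' p * x' q \<le> x p * x q"
      proof -
        have "x' p * x' q = (x p + \<delta>) * (x q - \<delta>)" using pq by (simp add: x'_def)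
        also have "\<dots> = x p * x q - \<delta> * (x p - x q) - \<delta> * \<delta>" by (simp add: algebra_simps)
        also have "\<dots> \<le> x p * x q"
        proof -
          have "0 \<le> \<delta> * (x p - x q)" using dpos xqp by simp
          moreover have "0 \<le> \<delta> * \<delta>" by simp
          ultimately show ?thesis by linarith
        qed
        finally show ?thesis .
      qed
      then have "x' p * x' q * prod x ({1..n} - {p} - {q}) \<le> x p * x q * prod x ({1..n} - {p} - {q})"
        using rnn by (rule mult_right_mono)
      then show ?thesis unfolding e1[of x'] e1[of x] rest by (simp add: mult.assoc)
    qed
    have card_lt: "card {i\<in>{1..n}. a < x' i \<and> x' i < b} < card ?I"
    proof (rule psubset_card_mono[OF fI])
      have sub: "{i\<in>{1..n}. a < x' i \<and> x' i < b} \<subseteq> ?I"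
        using p q pq by (auto simp: x'_def)
      have "p \<notin> {i\<in>{1..n}. a < x' i \<and> x' i < b} \<or> q \<notin> {i\<in>{1..n}. a < x' i \<and> x' i < b}"
        using dcase pq by (auto simp: x'_def)
      then show "{i\<in>{1..n}. a < x' i \<and> x' i < b} \<subset> ?I" using sub p q by blast
    qed
    obtain x'' where x'': "isvec n x''" "nonincr n x''" "inbox n a b x''" "\<exists>J. shape n a b x'' J"
      "majs n x'' x'" "prod x'' {1..n} \<le> prod x' {1..n}"
      using less.hyps[OF card_lt x'v x's x'b] by blast
    show ?thesis
      using x'' x'maj x'prod by (intro exI[of _ x'']) (auto intro: majs_trans)
  qed
qed


definition Tset :: "nat \<Rightarrow> nat \<Rightarrow> real \<Rightarrow> real \<Rightarrow> real \<Rightarrow> real \<Rightarrow> real \<Rightarrow> real \<Rightarrow> nat \<Rightarrow>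
    ((nat \<Rightarrow> real) \<times> (nat \<Rightarrow> real)) set" where
  "Tset n m a b c d \<alpha> \<beta> k = (\<Union>i\<in>{0..m-k}. \<Union>j\<in>{0..n-1}. setSij n m a b c d \<alpha> \<beta> k i j)
                \<union> (\<Union>j\<in>{0..n}. setC n m a b c d \<alpha> \<beta> j)"

lemma bernoulli_powr:
  fixes w g :: real
  assumes "0 < g" "g \<le> 1" "0 < w"
  shows "1 + (w - 1) / g \<le> w powr (1 / g)"
proof -
  let ?A = "w powr (1 / g)"
  have A: "?A > 0" using assms by simp
  have "?A powr g * 1 powr (1 - g) \<le> g * ?A + (1 - g) * 1"
    by (rule Youngs_inequality_0) (use assms A in auto)
  moreover have "?A powr g = w" using assms by (simp add: powr_powr)
  ultimately have "w \<le> g * ?A + (1 - g)" by simp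
  then have "w - 1 + g \<le> g * ?A" by simp
  then have "(w - 1 + g) / g \<le> ?A" using assms(1) by (simp add: divide_le_eq mult.commute)
  moreover have "(w - 1 + g) / g = 1 + (w - 1) / g" using assms(1) by (simp add: field_simps)
  ultimately show ?thesis by simp
qed

lemma shape_nonincr:
  assumes "shape n a b x J" "inbox n a b x"
  shows "nonincr n x"
  unfolding nonincr_def
proof (intro allI impI)
  fix r s :: nat assume rs: "1 \<le> r \<and> r \<le> s \<and> s \<le> n"
  have bx: "a \<le> x i \<and> x i \<le> b" if "i \<in> {1..n}" for i using assms(2) that by (auto simp: inbox_def)
  show "x s \<le> x r"
  proof (cases "r \<le> J")
    case True then show ?thesis using assms(1) bx[of s] rs by (auto simp: shape_def)
  next
    case False
    then have "J + 1 \<le> r" by simp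
    then have "s = r \<or> J + 2 \<le> s" using rs by (cases "r = J + 1") auto
    moreover have "J + 2 \<le> r \<Longrightarrow> x r = a" using assms(1) rs by (auto simp: shape_def)
    ultimately show ?thesis using assms(1) bx[of r] rs by (auto simp: shape_def)
  qed
qed

lemma in_T_direct:
  assumes "1 \<le> n" "c < d" "k \<le> m"
    and xv: "isvec n x" and xb: "inbox n a b x" and sh: "shape n a b x J"
    and yv: "isvec m y" and ys: "nonincr m y" and yb: "inbox m c d y"
    and S: "(x, y) \<in> setS n m a b c d \<alpha> \<beta>"
    and cs: "x (J + 1) = a \<or> x (J + 1) = b \<or> card {r\<in>{1..m}. c < y r \<and> y r < d} \<le> k"
  shows "(x, y) \<in> Tset n m a b c d \<alpha> \<beta> k"
proof -
  have H: "(x, y) \<in> boxH n m a b c d" using S by (simp add: setS_def)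
  have J: "J < n" using sh by (simp add: shape_def)
  have xlo: "x i = b" if "i \<in> {1..n}" "i \<le> J" for i using sh that by (simp add: shape_def)
  have xhi: "x i = a" if "i \<in> {1..n}" "J + 2 \<le> i" for i using sh that by (simp add: shape_def)
  consider "x (J + 1) = a" | "x (J + 1) = b" | "card {r\<in>{1..m}. c < y r \<and> y r < d} \<le> k"
    using cs by blast
  then show ?thesis
  proof cases
    case 1
    have "(x, y) \<in> setC n m a b c d \<alpha> \<beta> J"
      unfolding setC_def using S H ys xlo xhi 1
      by (auto simp: Suc_le_eq) (metis Suc_eq_plus1 le_neq_implies_less Suc_leI add_2_eq_Suc')
    then show ?thesis using J by (auto simp: Tset_def)
  next
    case 2
    have "(x, y) \<in> setC n m a b c d \<alpha> \<beta> (J + 1)"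
      unfolding setC_def using S H ys xlo xhi 2
      by (auto simp: le_Suc_eq)
    then show ?thesis using J by (auto simp: Tset_def)
  next
    case 3
    have ys': "y s \<le> y r" if "1 \<le> r" "r \<le> s" "s \<le> m" for r s
      using ys that unfolding nonincr_def by auto
    have yb': "c \<le> y i \<and> y i \<le> d" if "i \<in> {1..m}" for i using yb that by (auto simp: inbox_def)
    define Ds where "Ds = {r\<in>{1..m}. y r = d}"
    define Es where "Es = {r\<in>{1..m}. c < y r}"
    have Ds: "Ds = {1..card Ds}"
      by (rule prefix_set) (use ys' yb' in \<open>auto simp: Ds_def\<close>, fastforce)
    have Es: "Es = {1..card Es}"
      by (rule prefix_set) (use ys' yb' in \<open>auto simp: Es_def\<close>, fastforce)
    have DE: "Ds \<subseteq> Es" using assms(2) by (auto simp: Ds_def Es_def)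
    have eI: "{r\<in>{1..m}. c < y r \<and> y r < d} = Es - Ds" using yb' by (force simp: Ds_def Es_def)
    have fD: "finite Ds" by (simp add: Ds_def)
    have "card (Es - Ds) = card Es - card Ds" by (rule card_Diff_subset[OF fD DE])
    then have cI: "card {r\<in>{1..m}. c < y r \<and> y r < d} = card Es - card Ds"
      by (simp only: eI)
    have cDE: "card Ds \<le> card Es" by (rule card_mono) (use DE in \<open>auto simp: Es_def\<close>)
    define i where "i = min (card Ds) (m - k)"
    have hi1: "y r = d" if "r \<in> {1..m}" "r \<le> i" for r
    proof -
      have "r \<in> Ds" using that by (subst Ds) (auto simp: i_def)
      then show ?thesis by (simp add: Ds_def)
    qed
    have hi2: "y r = c" if "r \<in> {1..m}" "i + k + 1 \<le> r" for r
    proof (cases "card Ds \<le> m - k")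
      case True
      then have "card Es + 1 \<le> r" using that 3 cI cDE by (simp add: i_def)
      then have "r \<notin> Es" by (subst Es) auto
      then have "\<not> c < y r" using that(1) by (simp add: Es_def)
      then show ?thesis using yb'[OF that(1)] by simp
    next
      case False
      then show ?thesis using that assms(3) by (simp add: i_def)
    qed
    have "(x, y) \<in> setSij n m a b c d \<alpha> \<beta> k i J"
      unfolding setSij_def using S H ys xlo xhi hi1 hi2 by (auto simp: Suc_le_eq)
    moreover have "i \<in> {0..m-k}" "J \<in> {0..n-1}" using J by (auto simp: i_def)
    ultimately show ?thesis by (auto simp: Tset_def)
  qed
qed


lemma prod_if_const:
  fixes m :: nat
  assumes "I \<subseteq> {1..m}"
  shows "(\<Prod>r=1..m. if r \<in> I then w else 1) = (w::real) ^ card I"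
proof -
  have "prod (\<lambda>_. w) ({1..m} \<inter> I) = (\<Prod>r\<in>{1..m}. if r \<in> I then w else 1)"
    by (rule prod.inter_restrict) (rule finite_atLeastAtMost)
  then have "(\<Prod>r=1..m. if r \<in> I then w else 1) = prod (\<lambda>_. w) ({1..m} \<inter> I)"
    by (rule sym)
  also have "{1..m} \<inter> I = I" using assms by auto
  finally show ?thesis by simp
qed

lemma ymain:
  assumes n1: "1 \<le> n" and m1: "1 \<le> m" and a0: "0 \<le> a" and ab: "a < b" and c0: "0 \<le> c" and cd: "c < d"
    and al: "\<alpha> > 0" and be: "\<beta> > 0" and kdef: "k = min m (nat \<lfloor>\<beta> / \<alpha>\<rfloor>)"
  shows "isvec n x \<Longrightarrow> inbox n a b x \<Longrightarrow> shape n a b x J \<Longrightarrow>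
         isvec m y \<Longrightarrow> nonincr m y \<Longrightarrow> inbox m c d y \<Longrightarrow> (x, y) \<in> setS n m a b c d \<alpha> \<beta> \<Longrightarrow>
         (x, y) \<in> convex hull Tset n m a b c d \<alpha> \<beta> k"
proof (induction "card {r\<in>{1..m}. c < y r \<and> y r < d}" arbitrary: x y rule: less_induct)
  case less
  define I where "I = {r\<in>{1..m}. c < y r \<and> y r < d}"
  have km: "k \<le> m" using kdef by simp
  have J: "J < n" using less.prems(3) by (simp add: shape_def)
  have J1: "J + 1 \<in> {1..n}" using J by auto
  define t where "t = x (J + 1)"
  have tb: "a \<le> t" "t \<le> b" using less.prems(2) J1 by (auto simp: inbox_def t_def)
  show ?case
  proof (cases "t = a \<or> t = b \<or> (card I) \<le> k")
    case True
    then show ?thesis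
      using in_T_direct[OF n1 cd km less.prems(1-7)] by (auto simp: t_def I_def intro: hull_inc)
  next
    case False
    then have ta: "a < t" "t < b" and Nk: "k < (card I)" using tb by auto
    have t0: "0 < t" using ta a0 by simp
    have "(card I) \<le> card {1..m}" by (rule card_mono) (auto simp: I_def)
    then have Nm: "(card I) \<le> m" by simp
    have kfl: "k = nat \<lfloor>\<beta> / \<alpha>\<rfloor>" using kdef Nk Nm by simp
    have "\<lfloor>\<beta> / \<alpha>\<rfloor> < int (card I)" using kfl Nk by linarith
    then have "\<beta> / \<alpha> < real (card I)" by (simp add: floor_less_iff)
    then have bN: "\<beta> < real (card I) * \<alpha>" using al by (simp add: divide_less_eq)
    have Npos: "real (card I) > 0" using Nk by simp
    define g where "g = \<beta> / (real (card I) * \<alpha>)"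
    have den: "0 < real (card I) * \<alpha>" using Npos al by simp
    have g0: "0 < g" unfolding g_def using be den by simp
    have g1: "g < 1" unfolding g_def using bN den by (simp add: divide_less_eq)
    have Ng: "real (card I) * \<alpha> = \<beta> / g" unfolding g_def using den be by simp
    have fI: "finite I" by (simp add: I_def)
    have neI: "I \<noteq> {}"
    proof
      assume e: "I = {}"
      have "card I = 0" unfolding e by simp
      then show False using Nk by linarith
    qed
    have yI: "c < y r" "y r < d" "0 < y r" "r \<in> {1..m}" if "r \<in> I" for r using that c0 by (auto simp: I_def)
    have yb: "c \<le> y r \<and> y r \<le> d" if "r \<in> {1..m}" for r using less.prems(6) that by (auto simp: inbox_def)
    have ysort: "y s \<le> y r" if "1 \<le> r" "r \<le> s" "s \<le> m" for r s
      using less.prems(5) that unfolding nonincr_def by auto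
    define Up where "Up = insert ((b - t) / t) ((\<lambda>r. (d - y r) / (g * y r)) ` I)"
    define Lo where "Lo = insert ((a - t) / t) ((\<lambda>r. (c - y r) / (g * y r)) ` I)"
    have fUp: "finite Up" "Up \<noteq> {}" and fLo: "finite Lo" "Lo \<noteq> {}" using fI by (auto simp: Up_def Lo_def)
    define mp where "mp = Min Up"
    define mm where "mm = Max Lo"
    have Up_pos: "\<forall>e\<in>Up. 0 < e"
    proof
      fix e assume "e \<in> Up"
      then consider "e = (b - t) / t" | r where "r \<in> I" "e = (d - y r) / (g * y r)"
        unfolding Up_def by blast
      then show "0 < e"
      proof cases
        case 1 then show ?thesis using ta t0 by simp
      next
        case (2 r)
        have "0 < d - y r" "0 < g * y r" using yI[OF 2(1)] g0 by auto
        then show ?thesis using 2(2) by simp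
      qed
    qed
    have Lo_neg: "\<forall>e\<in>Lo. e < 0"
    proof
      fix e assume "e \<in> Lo"
      then consider "e = (a - t) / t" | r where "r \<in> I" "e = (c - y r) / (g * y r)"
        unfolding Lo_def by blast
      then show "e < 0"
      proof cases
        case 1 then show ?thesis using ta t0 by (simp add: divide_neg_pos)
      next
        case (2 r)
        have "c - y r < 0" "0 < g * y r" using yI[OF 2(1)] g0 by auto
        then show ?thesis using 2(2) by (simp add: divide_neg_pos)
      qed
    qed
    have mp0: "0 < mp" using Min_in[OF fUp] Up_pos by (auto simp: mp_def)
    have mm0: "mm < 0" using Max_in[OF fLo] Lo_neg by (auto simp: mm_def)
    have mmlo: "(a - t) / t \<le> mm" using Max_ge[OF fLo(1)] by (auto simp: mm_def Lo_def)
    have mm1: "-1 \<le> mm"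
    proof -
      have "-1 \<le> (a - t) / t" using t0 a0 by (simp add: field_simps)
      then show ?thesis using mmlo by simp
    qed
    define W where "W \<mu> = 1 + g * \<mu>" for \<mu>
    define X where "X \<mu> = x(J + 1 := t * (1 + \<mu>))" for \<mu>
    define Y where "Y \<mu> = (\<lambda>r. if r \<in> I then y r * W \<mu> else y r)" for \<mu>
    have props: "isvec n (X \<mu>) \<and> inbox n a b (X \<mu>) \<and> shape n a b (X \<mu>) J \<and> X \<mu> (J + 1) = t * (1 + \<mu>) \<and>
        isvec m (Y \<mu>) \<and> nonincr m (Y \<mu>) \<and> inbox m c d (Y \<mu>) \<and>
        (X \<mu>, Y \<mu>) \<in> setS n m a b c d \<alpha> \<beta> \<and>
        {r\<in>{1..m}. c < Y \<mu> r \<and> Y \<mu> r < d} \<subseteq> I"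
      if mu: "mm \<le> \<mu>" "\<mu> \<le> mp" for \<mu>
    proof -
      have upb: "\<mu> \<le> e" if "e \<in> Up" for e using Min_le[OF fUp(1) that] mu by (simp add: mp_def)
      have lob: "e \<le> \<mu>" if "e \<in> Lo" for e using Max_ge[OF fLo(1) that] mu by (simp add: mm_def)
      have m1': "-1 \<le> \<mu>" using mm1 mu by simp
      have W0: "0 < W \<mu>"
      proof -
        have "g * (-1) \<le> g * \<mu>" using m1' g0 by (intro mult_left_mono) auto
        then show ?thesis using g1 by (simp add: W_def)
      qed
      have tub: "t * (1 + \<mu>) \<le> b"
      proof -
        have "\<mu> \<le> (b - t) / t" using upb by (simp add: Up_def)
        then have "\<mu> * t \<le> b - t" using t0 by (simp add: le_divide_eq)
        then show ?thesis by (simp add: algebra_simps)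
      qed
      have tlb: "a \<le> t * (1 + \<mu>)"
      proof -
        have "(a - t) / t \<le> \<mu>" using lob by (simp add: Lo_def)
        then have "a - t \<le> \<mu> * t" using t0 by (simp add: divide_le_eq)
        then show ?thesis by (simp add: algebra_simps)
      qed
      have yub: "y r * W \<mu> \<le> d" if "r \<in> I" for r
      proof -
        have "\<mu> \<le> (d - y r) / (g * y r)" using upb that by (simp add: Up_def)
        then have "\<mu> * (g * y r) \<le> d - y r" using g0 yI[OF that] by (simp add: le_divide_eq)
        then show ?thesis by (simp add: W_def algebra_simps)
      qed
      have ylb: "c \<le> y r * W \<mu>" if "r \<in> I" for r
      proof -
        have "(c - y r) / (g * y r) \<le> \<mu>" using lob that by (simp add: Lo_def)
        then have "c - y r \<le> \<mu> * (g * y r)" using g0 yI[OF that] by (simp add: divide_le_eq)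
        then show ?thesis by (simp add: W_def algebra_simps)
      qed
      have Xv: "isvec n (X \<mu>)" using less.prems(1) J1 by (auto simp: isvec_def X_def)
      have Xb: "inbox n a b (X \<mu>)" using less.prems(2) tub tlb by (auto simp: inbox_def X_def)
      have Xs: "shape n a b (X \<mu>) J" using less.prems(3) by (auto simp: shape_def X_def)
      have Yv: "isvec m (Y \<mu>)" using less.prems(4) by (auto simp: isvec_def Y_def)
      have Yb: "inbox m c d (Y \<mu>)" using yb yub ylb by (auto simp: inbox_def Y_def)
      have Ys: "nonincr m (Y \<mu>)"
        unfolding nonincr_def
      proof (intro allI impI)
        fix r s :: nat assume rs: "1 \<le> r \<and> r \<le> s \<and> s \<le> m"
        have rm: "r \<in> {1..m}" and sm: "s \<in> {1..m}" using rs by auto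
        have yrs: "y s \<le> y r" using ysort rs by auto
        show "Y \<mu> s \<le> Y \<mu> r"
        proof (cases "r \<in> I")
          case rI: True
          show ?thesis
          proof (cases "s \<in> I")
            case True
            then show ?thesis using rI yrs W0 by (simp add: Y_def mult_right_mono)
          next
            case False
            then have "y s = c" using yb[OF sm] sm yrs yI[OF rI] by (auto simp: I_def)
            then show ?thesis using False rI ylb[OF rI] by (simp add: Y_def)
          qed
        next
          case rI: False
          show ?thesis
          proof (cases "s \<in> I")
            case True
            then have "y r = d" using yb[OF rm] rm yrs yI[OF True] rI by (auto simp: I_def)
            then show ?thesis using True rI yub[OF True] by (simp add: Y_def)
          next
            case False
            then show ?thesis using rI yrs by (simp add: Y_def)
          qed
        qed
      qed
      have PY: "(\<Prod>r=1..m. Y \<mu> r powr \<alpha>) = (\<Prod>r=1..m. y r powr \<alpha>) * (W \<mu> powr \<alpha>) ^ (card I)"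
      proof -
        have "(\<Prod>r=1..m. Y \<mu> r powr \<alpha>) = (\<Prod>r=1..m. y r powr \<alpha> * (if r \<in> I then W \<mu> powr \<alpha> else 1))"
          by (rule prod.cong) (auto simp: Y_def powr_mult)
        also have "\<dots> = (\<Prod>r=1..m. y r powr \<alpha>) * (\<Prod>r=1..m. if r \<in> I then W \<mu> powr \<alpha> else 1)"
          by (rule prod.distrib)
        also have "(\<Prod>r=1..m. if r \<in> I then W \<mu> powr \<alpha> else 1) = (W \<mu> powr \<alpha>) ^ (card I)"
          by (rule prod_if_const) (auto simp: I_def)
        finally show ?thesis .
      qed
      have PX: "(\<Prod>j=1..n. X \<mu> j powr \<beta>) = (\<Prod>j=1..n. x j powr \<beta>) * (1 + \<mu>) powr \<beta>"
      proof -
        have "(\<Prod>j=1..n. X \<mu> j powr \<beta>) = (\<Prod>j=1..n. x j powr \<beta> * (if j = J + 1 then (1 + \<mu>) powr \<beta> else 1))"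
          by (rule prod.cong) (auto simp: X_def powr_mult t_def)
        also have "\<dots> = (\<Prod>j=1..n. x j powr \<beta>) * (\<Prod>j=1..n. if j = J + 1 then (1 + \<mu>) powr \<beta> else 1)"
          by (rule prod.distrib)
        also have "(\<Prod>j=1..n. if j = J + 1 then (1 + \<mu>) powr \<beta> else 1) = (1 + \<mu>) powr \<beta>"
          using J1 by simp
        finally show ?thesis .
      qed
      have key: "(1 + \<mu>) powr \<beta> \<le> (W \<mu> powr \<alpha>) ^ (card I)"
      proof -
        have "(W \<mu> powr \<alpha>) ^ (card I) = (W \<mu> powr \<alpha>) powr real (card I)"
          using W0 by (simp add: powr_realpow)
        also have "\<dots> = W \<mu> powr (\<beta> / g)" using Ng by (simp add: powr_powr mult.commute)
        also have "\<dots> = (W \<mu> powr (1 / g)) powr \<beta>" by (simp add: powr_powr)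
        finally have e: "(W \<mu> powr \<alpha>) ^ (card I) = (W \<mu> powr (1 / g)) powr \<beta>" .
        have "1 + (W \<mu> - 1) / g \<le> W \<mu> powr (1 / g)"
          by (rule bernoulli_powr) (use g0 g1 W0 in auto)
        moreover have "1 + (W \<mu> - 1) / g = 1 + \<mu>" using g0 by (simp add: W_def)
        ultimately have bm: "1 + \<mu> \<le> W \<mu> powr (1 / g)" by simp
        show ?thesis unfolding e by (rule powr_mono2) (use be m1' bm in auto)
      qed
      have S0: "(\<Prod>j=1..n. x j powr \<beta>) \<le> (\<Prod>r=1..m. y r powr \<alpha>)"
        using less.prems(7) by (simp add: setS_def)
      have Snew: "(\<Prod>j=1..n. X \<mu> j powr \<beta>) \<le> (\<Prod>r=1..m. Y \<mu> r powr \<alpha>)"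
        unfolding PX PY by (rule mult_mono[OF S0 key]) (auto intro: prod_nonneg)
      have XYS: "(X \<mu>, Y \<mu>) \<in> setS n m a b c d \<alpha> \<beta>"
        using Xv Yv Xb Yb Snew by (auto simp: setS_def boxH_def inbox_def)
      have sub: "{r\<in>{1..m}. c < Y \<mu> r \<and> Y \<mu> r < d} \<subseteq> I"
        by (auto simp: Y_def I_def split: if_splits)
      show ?thesis using Xv Xb Xs Yv Ys Yb XYS sub by (simp add: X_def)
    qed
    have endpoint: "(X \<mu>, Y \<mu>) \<in> convex hull Tset n m a b c d \<alpha> \<beta> k"
      if mu: "mm \<le> \<mu>" "\<mu> \<le> mp" and
        alt: "t * (1 + \<mu>) = a \<or> t * (1 + \<mu>) = b \<or> (\<exists>r\<in>I. Y \<mu> r = c \<or> Y \<mu> r = d)" for \<mu>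
    proof -
      note P = props[OF mu]
      have Xv: "isvec n (X \<mu>)" and Xb: "inbox n a b (X \<mu>)" and Xs: "shape n a b (X \<mu>) J"
        and XJ: "X \<mu> (J + 1) = t * (1 + \<mu>)" and Yv: "isvec m (Y \<mu>)" and Ys: "nonincr m (Y \<mu>)"
        and Yb: "inbox m c d (Y \<mu>)" and XYS: "(X \<mu>, Y \<mu>) \<in> setS n m a b c d \<alpha> \<beta>"
        using P by auto
      show ?thesis
      proof (cases "t * (1 + \<mu>) = a \<or> t * (1 + \<mu>) = b")
        case True
        then show ?thesis
          using in_T_direct[OF n1 cd km Xv Xb Xs Yv Ys Yb XYS] XJ by (auto intro: hull_inc)
      next
        case False
        then obtain r0 where r0: "r0 \<in> I" "Y \<mu> r0 = c \<or> Y \<mu> r0 = d" using alt by blast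
        have "{r\<in>{1..m}. c < Y \<mu> r \<and> Y \<mu> r < d} \<subseteq> I - {r0}" using P r0 by auto
        then have "card {r\<in>{1..m}. c < Y \<mu> r \<and> Y \<mu> r < d} < (card I)"
          using r0(1) by (meson card_Diff1_less fI le_less_trans card_mono finite_Diff)
        then show ?thesis using less.hyps P unfolding I_def by blast
      qed
    qed
    have ep: "(X mp, Y mp) \<in> convex hull Tset n m a b c d \<alpha> \<beta> k"
    proof (rule endpoint)
      show "mm \<le> mp" using mm0 mp0 by simp
      have "mp \<in> Up" using Min_in[OF fUp] by (simp add: mp_def)
      then consider "mp = (b - t) / t" | r where "r \<in> I" "mp = (d - y r) / (g * y r)"
        by (auto simp: Up_def)
      then show "t * (1 + mp) = a \<or> t * (1 + mp) = b \<or> (\<exists>r\<in>I. Y mp r = c \<or> Y mp r = d)"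
      proof cases
        case 1 then show ?thesis using t0 by (simp add: field_simps)
      next
        case (2 r)
        then have "Y mp r = d" using g0 yI[OF 2(1)] by (simp add: Y_def W_def field_simps)
        then show ?thesis using 2 by blast
      qed
    qed simp
    have em: "(X mm, Y mm) \<in> convex hull Tset n m a b c d \<alpha> \<beta> k"
    proof (rule endpoint)
      show "mm \<le> mp" using mm0 mp0 by simp
      have "mm \<in> Lo" using Max_in[OF fLo] by (simp add: mm_def)
      then consider "mm = (a - t) / t" | r where "r \<in> I" "mm = (c - y r) / (g * y r)"
        by (auto simp: Lo_def)
      then show "t * (1 + mm) = a \<or> t * (1 + mm) = b \<or> (\<exists>r\<in>I. Y mm r = c \<or> Y mm r = d)"
      proof cases
        case 1 then show ?thesis using t0 by (simp add: field_simps)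
      next
        case (2 r)
        then have "Y mm r = c" using g0 yI[OF 2(1)] by (simp add: Y_def W_def field_simps)
        then show ?thesis using 2 by blast
      qed
    qed simp
    define th where "th = mp / (mp - mm)"
    have th: "0 \<le> th" "0 \<le> 1 - th" using mp0 mm0 by (auto simp: th_def field_simps)
    have thz: "th * mm + (1 - th) * mp = 0" using mp0 mm0 by (simp add: th_def field_simps)
    have comb: "(x, y) = th *\<^sub>R (X mm, Y mm) + (1 - th) *\<^sub>R (X mp, Y mp)"
    proof -
      have "x = th *\<^sub>R X mm + (1 - th) *\<^sub>R X mp"
      proof
        fix i
        show "x i = (th *\<^sub>R X mm + (1 - th) *\<^sub>R X mp) i"
        proof (cases "i = J + 1")
          case True
          have "th * (t * (1 + mm)) + (1 - th) * (t * (1 + mp)) = t + t * (th * mm + (1 - th) * mp)"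
            by (simp add: algebra_simps)
          then show ?thesis using True thz by (simp add: X_def t_def)
        next
          case False
          then show ?thesis by (simp add: X_def algebra_simps)
        qed
      qed
      moreover have "y = th *\<^sub>R Y mm + (1 - th) *\<^sub>R Y mp"
      proof
        fix i
        have e1: "th * (y i * W mm) + (1 - th) * (y i * W mp) = y i + y i * g * (th * mm + (1 - th) * mp)"
          by (simp add: W_def algebra_simps)
        show "y i = (th *\<^sub>R Y mm + (1 - th) *\<^sub>R Y mp) i"
        proof (cases "i \<in> I")
          case True
          then have "(th *\<^sub>R Y mm + (1 - th) *\<^sub>R Y mp) i = th * (y i * W mm) + (1 - th) * (y i * W mp)"
            by (simp add: Y_def)
          then show ?thesis using e1 thz by simp
        next
          case False
          then have "(th *\<^sub>R Y mm + (1 - th) *\<^sub>R Y mp) i = th * y i + (1 - th) * y i"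
            by (simp add: Y_def)
          then show ?thesis by (simp add: algebra_simps)
        qed
      qed
      ultimately show ?thesis by simp
    qed
    show ?thesis
      unfolding comb by (rule convexD[OF convex_convex_hull em ep th]) simp
  qed
qed


lemma x_nonincr:
  assumes "\<forall>s\<in>{1..n}. s \<le> j \<longrightarrow> x s = b" "\<forall>s\<in>{1..n}. j + 2 \<le> s \<longrightarrow> x s = a" "inbox n a b x"
  shows "nonincr n x"
  unfolding nonincr_def
proof (intro allI impI)
  fix r s :: nat assume rs: "1 \<le> r \<and> r \<le> s \<and> s \<le> n"
  have bx: "a \<le> x i \<and> x i \<le> b" if "i \<in> {1..n}" for i using assms(3) that by (auto simp: inbox_def)
  show "x s \<le> x r"
  proof (cases "r \<le> j")
    case True then show ?thesis using assms(1) bx[of s] rs by auto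
  next
    case False
    then have "s = r \<or> j + 2 \<le> s" using rs by (cases "r = j + 1") auto
    moreover have "j + 2 \<le> r \<Longrightarrow> x r = a" using assms(2) rs by auto
    ultimately show ?thesis using assms(2) bx[of r] rs by auto
  qed
qed

lemma Tset_sub_S: "Tset n m a b c d \<alpha> \<beta> k \<subseteq> setS n m a b c d \<alpha> \<beta>"
  by (auto simp: Tset_def setSij_def setC_def)

lemma boxH_inbox: "(x, y) \<in> boxH n m a b c d \<Longrightarrow> isvec n x \<and> isvec m y \<and> inbox n a b x \<and> inbox m c d y"
  by (auto simp: boxH_def inbox_def)

lemma Tset_sorted:
  "Tset n m a b c d \<alpha> \<beta> k \<subseteq> {(u, v). isvec n u \<and> isvec m v \<and> nonincr n u \<and> nonincr m v}"
proof
  fix z assume z: "z \<in> Tset n m a b c d \<alpha> \<beta> k"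
  obtain u v where zuv: "z = (u, v)" by (cases z)
  have H: "(u, v) \<in> boxH n m a b c d" using z zuv Tset_sub_S[of n m a b c d \<alpha> \<beta> k]
    by (auto simp: setS_def)
  have vs: "nonincr m v" using z zuv by (auto simp: Tset_def setSij_def setC_def)
  have "\<exists>j. (\<forall>s\<in>{1..n}. s \<le> j \<longrightarrow> u s = b) \<and> (\<forall>s\<in>{1..n}. j + 2 \<le> s \<longrightarrow> u s = a)"
    using z zuv by (auto simp: Tset_def setSij_def setC_def)
  then have "nonincr n u" using x_nonincr boxH_inbox[OF H] by blast
  then show "z \<in> {(u, v). isvec n u \<and> isvec m v \<and> nonincr n u \<and> nonincr m v}"
    using zuv vs boxH_inbox[OF H] by auto
qed

lemma conv_Tset_sorted:
  "convex hull Tset n m a b c d \<alpha> \<beta> k \<subseteq> {(u, v). isvec n u \<and> isvec m v \<and> nonincr n u \<and> nonincr m v}"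
proof (rule hull_minimal[OF Tset_sorted])
  show "convex {(u, v). isvec n u \<and> isvec m v \<and> nonincr n u \<and> nonincr m v}"
    unfolding convex_def by (auto intro!: isvec_comb nonincr_comb)
qed

definition Rset where
  "Rset n m a b c d \<alpha> \<beta> k = {(x, y). isvec n x \<and> isvec m y \<and>
     (\<exists>u v. majorizes m v y \<and> majorizes n u x \<and> isvec n u \<and> isvec m v \<and>
            (u, v) \<in> convex hull Tset n m a b c d \<alpha> \<beta> k)}"

lemma Rset_convex: "convex (Rset n m a b c d \<alpha> \<beta> k)"
proof (rule convexI)
  fix z1 z2 and s t :: real
  assume z1: "z1 \<in> Rset n m a b c d \<alpha> \<beta> k" and z2: "z2 \<in> Rset n m a b c d \<alpha> \<beta> k"
    and st0: "0 \<le> s" "0 \<le> t" "s + t = 1"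
  then have st: "0 \<le> s \<and> 0 \<le> t \<and> s + t = 1" by simp
  obtain x1 y1 u1 v1 where A: "z1 = (x1, y1)" "isvec n x1" "isvec m y1" "majorizes m v1 y1"
    "majorizes n u1 x1" "isvec n u1" "isvec m v1" "(u1, v1) \<in> convex hull Tset n m a b c d \<alpha> \<beta> k"
    using z1 by (auto simp: Rset_def)
  obtain x2 y2 u2 v2 where B: "z2 = (x2, y2)" "isvec n x2" "isvec m y2" "majorizes m v2 y2"
    "majorizes n u2 x2" "isvec n u2" "isvec m v2" "(u2, v2) \<in> convex hull Tset n m a b c d \<alpha> \<beta> k"
    using z2 by (auto simp: Rset_def)
  have s1: "nonincr n u1" "nonincr m v1" using A(8) conv_Tset_sorted by blast+
  have s2: "nonincr n u2" "nonincr m v2" using B(8) conv_Tset_sorted by blast+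
  have "s *\<^sub>R (u1, v1) + t *\<^sub>R (u2, v2) \<in> convex hull Tset n m a b c d \<alpha> \<beta> k"
    by (rule convexD[OF convex_convex_hull A(8) B(8)]) (use st in auto)
  then have uvc: "(s *\<^sub>R u1 + t *\<^sub>R u2, s *\<^sub>R v1 + t *\<^sub>R v2) \<in> convex hull Tset n m a b c d \<alpha> \<beta> k"
    by simp
  have mu: "majorizes n (s *\<^sub>R u1 + t *\<^sub>R u2) (s *\<^sub>R x1 + t *\<^sub>R x2)"
    by (rule maj_convex) (use s1 s2 A B st in auto)
  have mv: "majorizes m (s *\<^sub>R v1 + t *\<^sub>R v2) (s *\<^sub>R y1 + t *\<^sub>R y2)"
    by (rule maj_convex) (use s1 s2 A B st in auto)
  show "s *\<^sub>R z1 + t *\<^sub>R z2 \<in> Rset n m a b c d \<alpha> \<beta> k"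
    unfolding A(1) B(1) Rset_def
    using uvc mu mv A B by (auto intro!: isvec_comb)
qed

lemma prod_powr_le:
  assumes "\<And>j. j \<in> {1..n} \<Longrightarrow> 0 \<le> u j" "prod u {1..n} \<le> prod x {1..(n::nat)}" "0 \<le> \<beta>"
  shows "(\<Prod>j=1..n. u j powr \<beta>) \<le> (\<Prod>j=1..n. x j powr (\<beta>::real))"
proof -
  have "(\<Prod>j=1..n. u j powr \<beta>) = (prod u {1..n}) powr \<beta>" by (simp add: prod_powr_distrib)
  also have "\<dots> \<le> (prod x {1..n}) powr \<beta>"
    by (rule powr_mono2) (use assms in \<open>auto intro: prod_nonneg\<close>)
  also have "\<dots> = (\<Prod>j=1..n. x j powr \<beta>)" by (simp add: prod_powr_distrib)
  finally show ?thesis .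
qed

lemma S_sub_R:
  assumes n1: "1 \<le> n" and m1: "1 \<le> m" and a0: "0 \<le> a" and ab: "a < b" and c0: "0 \<le> c" and cd: "c < d"
    and al: "\<alpha> > 0" and be: "\<beta> > 0" and kdef: "k = min m (nat \<lfloor>\<beta> / \<alpha>\<rfloor>)"
    and S: "(x, y) \<in> setS n m a b c d \<alpha> \<beta>"
  shows "(x, y) \<in> Rset n m a b c d \<alpha> \<beta> k"
proof -
  have H: "(x, y) \<in> boxH n m a b c d" using S by (simp add: setS_def)
  note HB = boxH_inbox[OF H]
  obtain p where p: "p permutes {1..n}" "sv n x = x \<circ> p" using sv_perm_exists HB by blast
  obtain q where q: "q permutes {1..m}" "sv m y = y \<circ> q" using sv_perm_exists HB by blast
  have S': "(sv n x, sv m y) \<in> setS n m a b c d \<alpha> \<beta>"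
    using setS_perm[OF S p(1) q(1)] p(2) q(2) by simp
  have H': "(sv n x, sv m y) \<in> boxH n m a b c d" using S' by (simp add: setS_def)
  note HB' = boxH_inbox[OF H']
  obtain x' where x': "isvec n x'" "nonincr n x'" "inbox n a b x'" "\<exists>J. shape n a b x' J"
    "majs n x' (sv n x)" "prod x' {1..n} \<le> prod (sv n x) {1..n}"
    using xmove[OF isvec_sv nonincr_sv _ a0 ab n1] HB' by blast
  obtain J where J: "shape n a b x' J" using x'(4) by blast
  have x'0: "0 \<le> x' j" if "j \<in> {1..n}" for j
  proof -
    have "a \<le> x' j" using x'(3) that by (auto simp: inbox_def)
    then show ?thesis using a0 by linarith
  qed
  have "(\<Prod>j=1..n. x' j powr \<beta>) \<le> (\<Prod>j=1..n. sv n x j powr \<beta>)"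
    by (rule prod_powr_le[OF x'0 x'(6)]) (use be in auto)
  also have "\<dots> \<le> (\<Prod>i=1..m. sv m y i powr \<alpha>)" using S' by (simp add: setS_def)
  finally have PP: "(\<Prod>j=1..n. x' j powr \<beta>) \<le> (\<Prod>i=1..m. sv m y i powr \<alpha>)" .
  have S'': "(x', sv m y) \<in> setS n m a b c d \<alpha> \<beta>"
    using PP x' HB' by (auto simp: setS_def boxH_def inbox_def)
  have inT: "(x', sv m y) \<in> convex hull Tset n m a b c d \<alpha> \<beta> k"
    by (rule ymain[OF n1 m1 a0 ab c0 cd al be kdef x'(1) x'(3) J isvec_sv nonincr_sv]) (use HB' S'' in auto)
  have mx: "majorizes n x' x"
    unfolding majorizes_iff using sv_sorted[OF x'(1,2)] x'(5) by simp
  have my: "majorizes m (sv m y) y"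
    unfolding majorizes_iff using sv_sorted[OF isvec_sv nonincr_sv] majs_refl by metis
  show ?thesis unfolding Rset_def using HB inT mx my x'(1) isvec_sv by blast
qed

lemma part1:
  assumes n1: "1 \<le> n" and m1: "1 \<le> m" and a0: "0 \<le> a" and ab: "a < b" and c0: "0 \<le> c" and cd: "c < d"
    and al: "\<alpha> > 0" and be: "\<beta> > 0" and kdef: "k = min m (nat \<lfloor>\<beta> / \<alpha>\<rfloor>)"
  shows "convex hull (setS n m a b c d \<alpha> \<beta>) = Rset n m a b c d \<alpha> \<beta> k"
proof
  show "convex hull setS n m a b c d \<alpha> \<beta> \<subseteq> Rset n m a b c d \<alpha> \<beta> k"
  proof (rule hull_minimal)
    show "setS n m a b c d \<alpha> \<beta> \<subseteq> Rset n m a b c d \<alpha> \<beta> k"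
      using S_sub_R[OF n1 m1 a0 ab c0 cd al be kdef] by auto
    show "convex (Rset n m a b c d \<alpha> \<beta> k)" by (rule Rset_convex)
  qed
  show "Rset n m a b c d \<alpha> \<beta> k \<subseteq> convex hull setS n m a b c d \<alpha> \<beta>"
  proof
    fix z assume "z \<in> Rset n m a b c d \<alpha> \<beta> k"
    then obtain x y u v where "z = (x, y)" "isvec n x" "isvec m y" "majorizes m v y"
      "majorizes n u x" "isvec n u" "isvec m v" "(u, v) \<in> convex hull Tset n m a b c d \<alpha> \<beta> k"
      by (auto simp: Rset_def)
    then show "z \<in> convex hull setS n m a b c d \<alpha> \<beta>"
      using rhs_sub_conv[OF Tset_sub_S] by blast
  qed
qed


definition LJ :: "nat \<Rightarrow> real \<Rightarrow> real \<Rightarrow> nat \<Rightarrow> real \<Rightarrow> real" where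
  "LJ n a b J s = b ^ J * (a + s - (b - a) * real J) * a ^ (n - J - 1)"

definition pu :: "nat \<Rightarrow> real \<Rightarrow> real \<Rightarrow> real \<Rightarrow> real" where
  "pu n a b s = (\<Prod>j=1..n. ustar n a b s j)"

lemma istar_eq:
  assumes "a < b" "J \<le> n" "real J * (b - a) < s" "s \<le> real (J + 1) * (b - a)"
  shows "istar n a b s = J"
proof -
  have "0 \<le> real J * (b - a)" using assms(1) by simp
  then have s0: "s \<noteq> 0" using assms(3) by linarith
  have "Max {i. i \<le> n \<and> real i * (b - a) < s} = J"
  proof (rule Max_eqI)
    show "finite {i. i \<le> n \<and> real i * (b - a) < s}" by simp
    show "J \<in> {i. i \<le> n \<and> real i * (b - a) < s}" using assms by simp
    fix i assume "i \<in> {i. i \<le> n \<and> real i * (b - a) < s}"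
    then have "real i * (b - a) < real (J + 1) * (b - a)" using assms(4) by simp
    then have "real i < real (J + 1)" using assms(1) by (simp add: mult_less_cancel_right)
    then show "i \<le> J" by simp
  qed
  then show ?thesis using s0 by (simp add: istar_def)
qed

lemma istar_range:
  assumes "a < b" "1 \<le> n" "0 \<le> s" "s \<le> real n * (b - a)"
  shows "istar n a b s < n \<and>
    ((s = 0 \<and> istar n a b s = 0) \<or>
     (real (istar n a b s) * (b - a) < s \<and> s \<le> real (istar n a b s + 1) * (b - a)))"
proof (cases "s = 0")
  case True then show ?thesis using assms by (simp add: istar_def)
next
  case False
  then have sp: "0 < s" using assms by simp
  let ?A = "{i. i \<le> n \<and> real i * (b - a) < s}"
  have fA: "finite ?A" by simp
  have A0: "0 \<in> ?A" using sp by simp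
  define J where "J = Max ?A"
  have JA: "J \<in> ?A" unfolding J_def by (rule Max_in[OF fA]) (use A0 in blast)
  have ist: "istar n a b s = J" using False by (simp add: istar_def J_def)
  have Jn: "J < n"
  proof (rule ccontr)
    assume "\<not> J < n"
    then have "J = n" using JA by simp
    then show False using JA assms(4) by simp
  qed
  have "s \<le> real (J + 1) * (b - a)"
  proof (rule ccontr)
    assume "\<not> ?thesis"
    then have "J + 1 \<in> ?A" using Jn by simp
    then have "J + 1 \<le> J" using Max_ge[OF fA] by (simp add: J_def)
    then show False by simp
  qed
  then show ?thesis using ist Jn JA by simp
qed

lemma ustar_vals:
  fixes J :: nat
  assumes "istar n a b s = J"
  shows "ustar n a b s i = (if i \<le> J then b else if i = J + 1 then a + s - (b - a) * real J else a)"
  using assms by (simp add: ustar_def)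

lemma prod_split3:
  fixes f :: "nat \<Rightarrow> real"
  assumes "J < n"
  shows "(\<Prod>j=1..n. f j) = (\<Prod>j=1..J. f j) * f (J + 1) * (\<Prod>j=J+2..n. f j)"
proof -
  have e: "{1..n} = {1..J} \<union> ({J+1} \<union> {J+2..n})" using assms by auto
  have "(\<Prod>j=1..n. f j) = (\<Prod>j=1..J. f j) * (\<Prod>j\<in>{J+1} \<union> {J+2..n}. f j)"
    unfolding e by (rule prod.union_disjoint) auto
  also have "(\<Prod>j\<in>{J+1} \<union> {J+2..n}. f j) = f (J + 1) * (\<Prod>j=J+2..n. f j)"
    by (subst prod.union_disjoint) auto
  finally show ?thesis by (simp add: mult.assoc)
qed

lemma sum_split3:
  fixes f :: "nat \<Rightarrow> real"
  assumes "J < n"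
  shows "(\<Sum>j=1..n. f j) = (\<Sum>j=1..J. f j) + f (J + 1) + (\<Sum>j=J+2..n. f j)"
proof -
  have e: "{1..n} = {1..J} \<union> ({J+1} \<union> {J+2..n})" using assms by auto
  have "(\<Sum>j=1..n. f j) = (\<Sum>j=1..J. f j) + (\<Sum>j\<in>{J+1} \<union> {J+2..n}. f j)"
    unfolding e by (rule sum.union_disjoint) auto
  also have "(\<Sum>j\<in>{J+1} \<union> {J+2..n}. f j) = f (J + 1) + (\<Sum>j=J+2..n. f j)"
    by (subst sum.union_disjoint) auto
  finally show ?thesis by (simp add: add.assoc)
qed

lemma card_J2: "J < n \<Longrightarrow> card {J+2..n} = n - J - 1" by simp

lemma pu_LJ:
  assumes "istar n a b s = J" "J < n"
  shows "pu n a b s = LJ n a b J s"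
proof -
  have "pu n a b s = (\<Prod>j=1..J. ustar n a b s j) * ustar n a b s (J + 1) * (\<Prod>j=J+2..n. ustar n a b s j)"
    unfolding pu_def by (rule prod_split3[OF assms(2)])
  also have "(\<Prod>j=1..J. ustar n a b s j) = b ^ J"
    using ustar_vals[OF assms(1)] by simp
  also have "(\<Prod>j=J+2..n. ustar n a b s j) = a ^ (n - J - 1)"
  proof -
    have "(\<Prod>j=J+2..n. ustar n a b s j) = (\<Prod>j=J+2..n. a)"
      by (rule prod.cong) (auto simp: ustar_vals[OF assms(1)])
    then show ?thesis using assms(2) by simp
  qed
  also have "ustar n a b s (J + 1) = a + s - (b - a) * real J" using ustar_vals[OF assms(1)] by simp
  finally show ?thesis by (simp add: LJ_def)
qed

lemma LJ_step:
  assumes "J + 2 \<le> n"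
  shows "LJ n a b (J + 1) s - LJ n a b J s = b ^ J * a ^ (n - J - 2) * (b - a) * (s - real (J + 1) * (b - a))"
proof -
  define r where "r = n - J - 2"
  have r: "n - J - 1 = Suc r" "n - (J + 1) - 1 = r" "n - J - 2 = r" using assms unfolding r_def by arith+
  show ?thesis unfolding LJ_def r by (simp add: algebra_simps)
qed

lemma LJ_up:
  assumes "a < b" "0 \<le> a" "J \<le> J0" "J0 < n" "real J0 * (b - a) < s \<or> J = J0"
  shows "LJ n a b J s \<le> LJ n a b J0 s"
  using assms(3-5)
proof (induction "J0 - J" arbitrary: J)
  case 0 then show ?case by simp
next
  case (Suc k)
  then have J1: "J + 1 \<le> J0" "J \<noteq> J0" by auto
  then have s: "real J0 * (b - a) < s" using Suc.prems by simp
  have "LJ n a b (J + 1) s \<le> LJ n a b J0 s"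
    using Suc.hyps(1)[of "J + 1"] Suc.hyps(2) J1 Suc.prems s by simp
  moreover have "LJ n a b J s \<le> LJ n a b (J + 1) s"
  proof -
    have "real (J + 1) * (b - a) \<le> real J0 * (b - a)" using J1 assms(1) by (intro mult_right_mono) auto
    then have "0 \<le> s - real (J + 1) * (b - a)" using s by simp
    then have "0 \<le> b ^ J * a ^ (n - J - 2) * (b - a) * (s - real (J + 1) * (b - a))"
      using assms(1,2) by (intro mult_nonneg_nonneg) auto
    then show ?thesis using LJ_step[of J n a b s] J1 Suc.prems by simp
  qed
  ultimately show ?case by simp
qed

lemma LJ_down:
  assumes "a < b" "0 \<le> a" "J0 \<le> J" "J < n" "s \<le> real (J0 + 1) * (b - a)"
  shows "LJ n a b J s \<le> LJ n a b J0 s"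
  using assms(3-4)
proof (induction "J - J0" arbitrary: J)
  case 0 then show ?case by simp
next
  case (Suc k)
  define J' where "J' = J - 1"
  have J': "J = J' + 1" "J0 \<le> J'" using Suc.hyps(2) unfolding J'_def by arith+
  have "LJ n a b J' s \<le> LJ n a b J0 s"
    using Suc.hyps(1)[of J'] Suc.hyps(2) J' Suc.prems by simp
  moreover have "LJ n a b J s \<le> LJ n a b J' s"
  proof -
    have "real (J0 + 1) * (b - a) \<le> real (J' + 1) * (b - a)" using J' assms(1) by (intro mult_right_mono) auto
    then have "s - real (J' + 1) * (b - a) \<le> 0" using assms(5) by simp
    moreover have "0 \<le> b ^ J' * a ^ (n - J' - 2) * (b - a)" using assms(1,2) by simp
    ultimately have "b ^ J' * a ^ (n - J' - 2) * (b - a) * (s - real (J' + 1) * (b - a)) \<le> 0"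
      by (simp add: mult_nonneg_nonpos)
    then show ?thesis using LJ_step[of J' n a b s] J' Suc.prems by simp
  qed
  ultimately show ?case by simp
qed

lemma pu_ge_LJ:
  assumes "a < b" "0 \<le> a" "1 \<le> n" "0 \<le> s" "s \<le> real n * (b - a)" "J < n"
  shows "LJ n a b J s \<le> pu n a b s"
proof -
  define J0 where "J0 = istar n a b s"
  have R: "J0 < n" "(s = 0 \<and> J0 = 0) \<or> (real J0 * (b - a) < s \<and> s \<le> real (J0 + 1) * (b - a))"
    using istar_range[OF assms(1,3,4,5)] by (auto simp: J0_def)
  have pu: "pu n a b s = LJ n a b J0 s" using pu_LJ[of n a b s J0] R by (simp add: J0_def)
  have sle: "s \<le> real (J0 + 1) * (b - a)" using R assms(1) by auto
  show ?thesis
  proof (cases "J \<le> J0")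
    case True
    have "real J0 * (b - a) < s \<or> J = J0" using R True by auto
    then show ?thesis using LJ_up[OF assms(1,2) True R(1)] pu by simp
  next
    case False
    then show ?thesis using LJ_down[OF assms(1,2) _ assms(6) sle] pu by simp
  qed
qed

lemma pu_convex:
  assumes "a < b" "0 \<le> a" "1 \<le> n"
    and s1: "0 \<le> s1" "s1 \<le> real n * (b - a)" and s2: "0 \<le> s2" "s2 \<le> real n * (b - a)"
    and l: "0 \<le> l" "l \<le> 1"
  shows "pu n a b (l * s1 + (1 - l) * s2) \<le> l * pu n a b s1 + (1 - l) * pu n a b s2"
proof -
  let ?s = "l * s1 + (1 - l) * s2"
  have s0: "0 \<le> ?s" using s1 s2 l by simp
  have sn: "?s \<le> real n * (b - a)"
  proof -
    have "?s \<le> l * (real n * (b - a)) + (1 - l) * (real n * (b - a))"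
      using s1 s2 l by (intro add_mono mult_left_mono) auto
    then show ?thesis by (simp add: algebra_simps)
  qed
  define J0 where "J0 = istar n a b ?s"
  have R: "J0 < n" using istar_range[OF assms(1,3) s0 sn] by (simp add: J0_def)
  have "pu n a b ?s = LJ n a b J0 ?s" using pu_LJ[of n a b ?s J0] R by (simp add: J0_def)
  also have "\<dots> = l * LJ n a b J0 s1 + (1 - l) * LJ n a b J0 s2"
    by (simp add: LJ_def algebra_simps)
  also have "\<dots> \<le> l * pu n a b s1 + (1 - l) * pu n a b s2"
    using pu_ge_LJ[OF assms(1-3) s1 R] pu_ge_LJ[OF assms(1-3) s2 R] l
    by (intro add_mono mult_left_mono) auto
  finally show ?thesis .
qed

lemma ustar_bounds:
  assumes "a < b" "1 \<le> n" "0 \<le> s" "s \<le> real n * (b - a)"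
  shows "a \<le> ustar n a b s i \<and> ustar n a b s i \<le> b"
proof -
  define J0 where "J0 = istar n a b s"
  have R: "J0 < n" "(s = 0 \<and> J0 = 0) \<or> (real J0 * (b - a) < s \<and> s \<le> real (J0 + 1) * (b - a))"
    using istar_range[OF assms] by (auto simp: J0_def)
  have "a \<le> a + s - (b - a) * real J0 \<and> a + s - (b - a) * real J0 \<le> b"
    using R assms(1) by (auto simp: algebra_simps)
  then show ?thesis using ustar_vals[of n a b s J0] assms(1) by (simp add: J0_def)
qed

lemma pu_nonneg:
  assumes "a < b" "0 \<le> a" "1 \<le> n" "0 \<le> s" "s \<le> real n * (b - a)"
  shows "0 \<le> pu n a b s"
  unfolding pu_def using ustar_bounds[OF assms(1) assms(3-5)] assms(2)
  by (intro prod_nonneg) (meson order_trans)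

lemma shape_ustar:
  assumes "a < b" "isvec n x" "inbox n a b x" "shape n a b x J"
  shows "\<forall>j\<in>{1..n}. x j = ustar n a b (sumS n a x) j"
proof -
  have J: "J < n" using assms(4) by (simp add: shape_def)
  have xlo: "x i = b" if "i \<in> {1..n}" "i \<le> J" for i using assms(4) that by (simp add: shape_def)
  have xhi: "x i = a" if "i \<in> {1..n}" "J + 2 \<le> i" for i using assms(4) that by (simp add: shape_def)
  define t where "t = x (J + 1)"
  have t: "a \<le> t" "t \<le> b" using assms(3) J by (auto simp: inbox_def t_def)
  have "sumS n a x = (\<Sum>j=1..J. x j - a) + (t - a) + (\<Sum>j=J+2..n. x j - a)"
    unfolding sumS_def t_def by (rule sum_split3[OF J])
  also have "(\<Sum>j=1..J. x j - a) = real J * (b - a)"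
  proof -
    have "(\<Sum>j=1..J. x j - a) = (\<Sum>j=1..J. b - a)" by (rule sum.cong) (use xlo J in auto)
    then show ?thesis by simp
  qed
  also have "(\<Sum>j=J+2..n. x j - a) = 0" using xhi by simp
  finally have sx: "sumS n a x = real J * (b - a) + (t - a)" by simp
  show ?thesis
  proof (cases "t = a \<and> J > 0")
    case True
    then obtain J' where J': "J = J' + 1" by (metis Suc_eq_plus1 gr0_implies_Suc)
    have ist: "istar n a b (sumS n a x) = J'"
      by (rule istar_eq) (use assms(1) sx True J J' in \<open>auto simp: algebra_simps\<close>)
    have mid: "a + sumS n a x - (b - a) * real J' = b" using sx True J' by (simp add: algebra_simps)
    have u: "ustar n a b (sumS n a x) i = (if i \<le> J' then b else if i = J' + 1 then b else a)" for i
      using ustar_vals[OF ist, of i] mid by simp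
    show ?thesis
    proof
      fix j assume j: "j \<in> {1..n}"
      show "x j = ustar n a b (sumS n a x) j"
        using u[of j] xlo[OF j] xhi[OF j] True J' t_def by (cases "j \<le> J"; cases "j = J + 1") auto
    qed
  next
    case False
    then consider "J = 0" "t = a" | "a < t" using t by linarith
    then have ist: "istar n a b (sumS n a x) = J"
    proof cases
      case 1 then show ?thesis using sx by (simp add: istar_def)
    next
      case 2 then show ?thesis
        by (intro istar_eq) (use assms(1) sx J t in \<open>auto simp: algebra_simps\<close>)
    qed
    show ?thesis
    proof
      fix j assume j: "j \<in> {1..n}"
      show "x j = ustar n a b (sumS n a x) j"
        using ustar_vals[OF ist, of j] xlo[OF j] xhi[OF j] sx t_def by (cases "j \<le> J"; cases "j = J + 1") auto
    qed
  qed
qed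


lemma powr_le_self: "0 \<le> u \<Longrightarrow> u \<le> 1 \<Longrightarrow> 1 \<le> g \<Longrightarrow> u powr g \<le> (u::real)"
  by (cases "u = 0") (auto intro: powr_le_one_le)

lemma powr_cvx:
  fixes p1 p2 l g :: real
  assumes "0 \<le> p1" "0 \<le> p2" "0 \<le> l" "l \<le> 1" "1 \<le> g"
  shows "(l * p1 + (1 - l) * p2) powr g \<le> l * p1 powr g + (1 - l) * p2 powr g"
proof (cases "p1 = 0 \<or> p2 = 0")
  case True
  then show ?thesis
  proof
    assume p: "p1 = 0"
    have "((1 - l) * p2) powr g = (1 - l) powr g * p2 powr g" by (simp add: powr_mult)
    also have "\<dots> \<le> (1 - l) * p2 powr g"
      by (rule mult_right_mono[OF powr_le_self]) (use assms in auto)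
    finally show ?thesis using p by simp
  next
    assume p: "p2 = 0"
    have "(l * p1) powr g = l powr g * p1 powr g" by (simp add: powr_mult)
    also have "\<dots> \<le> l * p1 powr g"
      by (rule mult_right_mono[OF powr_le_self]) (use assms in auto)
    finally show ?thesis using p by simp
  qed
next
  case False
  then have pp: "p1 \<in> {0<..}" "p2 \<in> {0<..}" using assms by auto
  have "(\<lambda>x. x powr g) ((1 - (1 - l)) *\<^sub>R p1 + (1 - l) *\<^sub>R p2) \<le>
        (1 - (1 - l)) * (\<lambda>x. x powr g) p1 + (1 - l) * (\<lambda>x. x powr g) p2"
    by (rule convex_onD[OF powr_convex[OF assms(5)]]) (use assms pp in auto)
  then show ?thesis by simp
qed

definition GM :: "nat \<Rightarrow> (nat \<Rightarrow> real) \<Rightarrow> real" where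
  "GM m y = (\<Prod>i=1..m. y i powr (1 / real m))"

lemma GM_nonneg: "0 \<le> GM m y" by (simp add: GM_def prod_nonneg)

lemma GM_concave:
  assumes m1: "1 \<le> m" and y0: "\<And>i. i \<in> {1..m} \<Longrightarrow> 0 \<le> y i" and z0: "\<And>i. i \<in> {1..m} \<Longrightarrow> 0 \<le> z i"
    and l: "0 \<le> l" "l \<le> 1"
  shows "l * GM m y + (1 - l) * GM m z \<le> GM m (l *\<^sub>R y + (1 - l) *\<^sub>R z)"
proof -
  define w where "w = l *\<^sub>R y + (1 - l) *\<^sub>R z"
  have wi: "w i = l * y i + (1 - l) * z i" for i by (simp add: w_def)
  show ?thesis
  proof (cases "l = 0 \<or> l = 1")
    case True then show ?thesis by (auto simp: w_def)
  next
    case False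
    then have l': "0 < l" "0 < 1 - l" using l by auto
    show ?thesis
    proof (cases "\<exists>i\<in>{1..m}. w i = 0")
      case True
      then obtain i where i: "i \<in> {1..m}" "w i = 0" by blast
      have "0 \<le> l * y i" "0 \<le> (1 - l) * z i" using y0[OF i(1)] z0[OF i(1)] l' by auto
      then have "l * y i = 0" "(1 - l) * z i = 0" using i(2) wi[of i] by linarith+
      then have yz: "y i = 0" "z i = 0" using l' by auto
      have "GM m y = 0" unfolding GM_def using i yz by (intro prod_zero) auto
      moreover have "GM m z = 0" unfolding GM_def using i yz by (intro prod_zero) auto
      ultimately show ?thesis using GM_nonneg[of m "l *\<^sub>R y + (1 - l) *\<^sub>R z"] by simp
    next
      case False
      have w0: "0 < w i" if "i \<in> {1..m}" for i
      proof -
        have "0 \<le> w i" unfolding wi using y0[OF that] z0[OF that] l'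
          by (intro add_nonneg_nonneg mult_nonneg_nonneg) auto
        moreover have "w i \<noteq> 0" using False that by blast
        ultimately show ?thesis by simp
      qed
      have wp: "0 < w i powr (1 / real m)" if "i \<in> {1..m}" for i using w0[OF that] by simp
      have Gw: "0 < GM m w" unfolding GM_def by (rule prod_pos) (use wp in blast)
      have cm: "card {1..m} = m" by simp
      have am: "GM m v / GM m w \<le> (\<Sum>i=1..m. (v i / w i) / real m)"
        if v0: "\<And>i. i \<in> {1..m} \<Longrightarrow> 0 \<le> v i" for v
      proof -
        have "(\<Prod>i=1..m. v i / w i) powr (1 / real (card {1..m})) \<le> (\<Sum>i=1..m. (v i / w i) / real (card {1..m}))"
          by (rule arith_geom_mean) (use m1 v0 w0 in \<open>auto intro: divide_nonneg_pos\<close>)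
        moreover have "(\<Prod>i=1..m. v i / w i) powr (1 / real m) = GM m v / GM m w"
          by (simp add: GM_def prod_powr_distrib powr_divide prod_dividef)
        ultimately show ?thesis by (simp add: cm)
      qed
      have "l * (GM m y / GM m w) + (1 - l) * (GM m z / GM m w)
          \<le> l * (\<Sum>i=1..m. (y i / w i) / real m) + (1 - l) * (\<Sum>i=1..m. (z i / w i) / real m)"
        using am[OF y0] am[OF z0] l' by (intro add_mono mult_left_mono) auto
      also have "\<dots> = (\<Sum>i=1..m. (l * y i + (1 - l) * z i) / w i / real m)"
        by (simp add: sum_distrib_left sum.distrib[symmetric] add_divide_distrib)
      also have "\<dots> = (\<Sum>i=1..m. 1 / real m)"
      proof (rule sum.cong[OF refl])
        fix i assume i: "i \<in> {1..m}"
        have "w i \<noteq> 0" using w0[OF i] by simp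
        then show "(l * y i + (1 - l) * z i) / w i / real m = 1 / real m" by (simp add: wi[symmetric])
      qed
      also have "\<dots> = 1" using m1 by simp
      finally have "(l * GM m y + (1 - l) * GM m z) / GM m w \<le> 1"
        by (simp add: add_divide_distrib)
      then show ?thesis using Gw by (simp add: w_def divide_le_eq)
    qed
  qed
qed


lemma cb_ge:
  fixes x y a u v :: real
  assumes "a \<le> x" "a \<le> y" "0 \<le> u" "0 \<le> v" "u + v = 1"
  shows "a \<le> u * x + v * y"
proof -
  have "u * a + v * a \<le> u * x + v * y" using assms by (intro add_mono mult_left_mono) auto
  moreover have "u * a + v * a = a" using assms(5) by (simp add: distrib_right[symmetric])
  ultimately show ?thesis by simp
qed

definition Qset where
  "Qset n m a b c d \<alpha> \<beta> = {(x, y) \<in> boxH n m a b c d.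
      (\<Prod>i=1..m. y i powr (1 / real m)) \<ge>
      (\<Prod>j=1..n. (ustar n a b (sumS n a x) j) powr (\<beta> / (real m * \<alpha>)))}"

lemma Q_iff: "(x, y) \<in> Qset n m a b c d \<alpha> \<beta> \<longleftrightarrow>
   (x, y) \<in> boxH n m a b c d \<and> pu n a b (sumS n a x) powr (\<beta> / (real m * \<alpha>)) \<le> GM m y"
  by (simp add: Qset_def GM_def pu_def prod_powr_distrib)

lemma sumS_psum: "sumS n a x = psum x n - real n * a"
  by (simp add: sumS_def psum_def sum_subtractf)

lemma sumS_range:
  assumes "inbox n a b x"
  shows "0 \<le> sumS n a x \<and> sumS n a x \<le> real n * (b - a)"
proof -
  have "0 \<le> sumS n a x" unfolding sumS_def using assms by (intro sum_nonneg) (auto simp: inbox_def)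
  moreover have "sumS n a x \<le> (\<Sum>i=1..n. b - a)"
    unfolding sumS_def using assms by (intro sum_mono) (auto simp: inbox_def)
  ultimately show ?thesis by simp
qed

lemma sumS_comb:
  assumes "u + v = 1"
  shows "sumS n a (u *\<^sub>R x1 + v *\<^sub>R x2) = u * sumS n a x1 + v * sumS n a x2"
proof -
  have e: "u * x1 i + v * x2 i - a = u * (x1 i - a) + v * (x2 i - a)" for i
  proof -
    have "u * (x1 i - a) + v * (x2 i - a) = u * x1 i + v * x2 i - (u + v) * a" by (simp add: algebra_simps)
    then show ?thesis using assms by simp
  qed
  show ?thesis unfolding sumS_def by (simp add: e sum.distrib sum_distrib_left)
qed

lemma reduce_x:
  assumes "isvec n x" "inbox n a b x" "0 \<le> a" "a < b" "1 \<le> n"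
  shows "\<exists>x'. isvec n x' \<and> inbox n a b x' \<and> majorizes n x' x \<and> prod x' {1..n} \<le> prod x {1..n} \<and>
     (\<forall>j\<in>{1..n}. x' j = ustar n a b (sumS n a x) j)"
proof -
  obtain p where p: "p permutes {1..n}" "sv n x = x \<circ> p" using sv_perm_exists assms(1) by blast
  have ib: "inbox n a b (sv n x)"
    using assms(2) permutes_in_image[OF p(1)] p(2) by (auto simp: inbox_def)
  obtain x' where x': "isvec n x'" "nonincr n x'" "inbox n a b x'" "\<exists>J. shape n a b x' J"
    "majs n x' (sv n x)" "prod x' {1..n} \<le> prod (sv n x) {1..n}"
    using xmove[OF isvec_sv nonincr_sv ib assms(3-5)] by blast
  obtain J where J: "shape n a b x' J" using x'(4) by blast
  have px: "prod (sv n x) {1..n} = prod x {1..n}"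
    using prod.permute[OF p(1), of x] p(2) by simp
  have "psum (sv n x) n = psum x n"
    using psum_perm_total[OF p(1), of x] p(2) by simp
  then have ss: "sumS n a x' = sumS n a x"
    using x'(5) by (simp add: sumS_psum majs_def)
  have mx: "majorizes n x' x"
    unfolding majorizes_iff using sv_sorted[OF x'(1,2)] x'(5) by simp
  show ?thesis
    using shape_ustar[OF assms(4) x'(1,3) J] ss x' px mx by (intro exI[of _ x']) auto
qed

lemma GM_powr:
  assumes "\<alpha> > 0" "1 \<le> m"
  shows "GM m y = (\<Prod>i=1..m. y i powr \<alpha>) powr (1 / (real m * \<alpha>))"
proof -
  have "(\<Prod>i=1..m. y i powr \<alpha>) powr (1 / (real m * \<alpha>)) = (\<Prod>i=1..m. (y i powr \<alpha>) powr (1 / (real m * \<alpha>)))"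
    by (simp add: prod_powr_distrib)
  also have "\<dots> = (\<Prod>i=1..m. y i powr (1 / real m))"
    using assms by (simp add: powr_powr)
  finally show ?thesis by (simp add: GM_def)
qed

lemma S_sub_Q:
  assumes n1: "1 \<le> n" and m1: "1 \<le> m" and a0: "0 \<le> a" and ab: "a < b"
    and al: "\<alpha> > 0" and be: "\<beta> > 0"
    and S: "(x, y) \<in> setS n m a b c d \<alpha> \<beta>"
  shows "(x, y) \<in> Qset n m a b c d \<alpha> \<beta>"
proof -
  have H: "(x, y) \<in> boxH n m a b c d" using S by (simp add: setS_def)
  note HB = boxH_inbox[OF H]
  obtain x' where x': "isvec n x'" "inbox n a b x'" "majorizes n x' x" "prod x' {1..n} \<le> prod x {1..n}"
    "\<forall>j\<in>{1..n}. x' j = ustar n a b (sumS n a x) j"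
    using reduce_x[OF _ _ a0 ab n1] HB by blast
  have pu: "pu n a b (sumS n a x) = prod x' {1..n}" unfolding pu_def using x'(5) by simp
  have x'0: "0 \<le> prod x' {1..n}"
  proof (rule prod_nonneg)
    fix j assume j: "j \<in> {1..n}"
    have "a \<le> x' j" using x'(2) j by (auto simp: inbox_def)
    then show "0 \<le> x' j" using a0 by linarith
  qed
  have "prod x' {1..n} powr (\<beta> / (real m * \<alpha>)) = (prod x' {1..n} powr \<beta>) powr (1 / (real m * \<alpha>))"
    by (simp add: powr_powr)
  also have "\<dots> \<le> (prod x {1..n} powr \<beta>) powr (1 / (real m * \<alpha>))"
    using x'0 x'(4) be m1 al by (intro powr_mono2 powr_mono2) auto
  also have "\<dots> \<le> (\<Prod>i=1..m. y i powr \<alpha>) powr (1 / (real m * \<alpha>))"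
  proof (rule powr_mono2)
    show "prod x {1..n} powr \<beta> \<le> (\<Prod>i=1..m. y i powr \<alpha>)"
      using S by (simp add: setS_def prod_powr_distrib)
  qed (use m1 al in auto)
  also have "\<dots> = GM m y" using GM_powr[OF al m1] by simp
  finally show ?thesis unfolding Q_iff using H pu by simp
qed

lemma Q_sub_conv:
  assumes n1: "1 \<le> n" and m1: "1 \<le> m" and a0: "0 \<le> a" and ab: "a < b"
    and al: "\<alpha> > 0" and be: "\<beta> > 0"
    and Q: "(x, y) \<in> Qset n m a b c d \<alpha> \<beta>"
  shows "(x, y) \<in> convex hull setS n m a b c d \<alpha> \<beta>"
proof -
  have H: "(x, y) \<in> boxH n m a b c d" and ineq: "pu n a b (sumS n a x) powr (\<beta> / (real m * \<alpha>)) \<le> GM m y"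
    using Q by (auto simp: Q_iff)
  note HB = boxH_inbox[OF H]
  obtain x' where x': "isvec n x'" "inbox n a b x'" "majorizes n x' x" "prod x' {1..n} \<le> prod x {1..n}"
    "\<forall>j\<in>{1..n}. x' j = ustar n a b (sumS n a x) j"
    using reduce_x[OF _ _ a0 ab n1] HB by blast
  have pu: "pu n a b (sumS n a x) = prod x' {1..n}" unfolding pu_def using x'(5) by simp
  have x'0: "0 \<le> prod x' {1..n}"
  proof (rule prod_nonneg)
    fix j assume j: "j \<in> {1..n}"
    have "a \<le> x' j" using x'(2) j by (auto simp: inbox_def)
    then show "0 \<le> x' j" using a0 by linarith
  qed
  have mpos: "0 < real m * \<alpha>" using m1 al by simp
  have mz: "real m \<noteq> 0" "\<alpha> \<noteq> 0" using m1 al by auto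
  have bb: "\<beta> / (real m * \<alpha>) * (real m * \<alpha>) = \<beta>" using mz by simp
  have "prod x' {1..n} powr \<beta> = (prod x' {1..n} powr (\<beta> / (real m * \<alpha>))) powr (real m * \<alpha>)"
    by (simp only: powr_powr bb)
  also have "\<dots> \<le> (GM m y) powr (real m * \<alpha>)"
    by (rule powr_mono2) (use ineq pu mpos in auto)
  also have "\<dots> = (\<Prod>i=1..m. y i powr \<alpha>)"
  proof -
    have "0 \<le> (\<Prod>i=1..m. y i powr \<alpha>)" by (simp add: prod_nonneg)
    then show ?thesis using GM_powr[OF al m1, of y] mpos by (simp add: powr_powr)
  qed
  finally have key: "(\<Prod>j=1..n. x' j powr \<beta>) \<le> (\<Prod>i=1..m. y i powr \<alpha>)"
    by (simp add: prod_powr_distrib)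
  have sub: "perms n x' \<times> {y} \<subseteq> setS n m a b c d \<alpha> \<beta>"
  proof
    fix z assume "z \<in> perms n x' \<times> {y}"
    then obtain p where p: "p permutes {1..n}" "z = (x' \<circ> p, y)" by (auto simp: perms_def)
    have pin: "\<And>i. i \<in> {1..n} \<Longrightarrow> p i \<in> {1..n}" using permutes_in_image[OF p(1)] by blast
    have pout: "\<And>i. i \<notin> {1..n} \<Longrightarrow> p i = i" using p(1) by (simp add: permutes_not_in)
    have pp: "(\<Prod>j=1..n. (x' \<circ> p) j powr \<beta>) = (\<Prod>j=1..n. x' j powr \<beta>)"
      using prod.permute[OF p(1), of "\<lambda>j. x' j powr \<beta>"] by (simp add: comp_def)
    show "z \<in> setS n m a b c d \<alpha> \<beta>"
      using p(2) pp key H x'(1,2) pin pout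
      by (auto simp: setS_def boxH_def isvec_def inbox_def)
  qed
  have "(x, y) \<in> (convex hull perms n x') \<times> (convex hull {y})"
    using hlp[OF HB[THEN conjunct1] x'(1) x'(3)] by simp
  also have "\<dots> = convex hull (perms n x' \<times> {y})" by (simp add: convex_hull_Times)
  also have "\<dots> \<subseteq> convex hull setS n m a b c d \<alpha> \<beta>" by (rule hull_mono[OF sub])
  finally show ?thesis .
qed

lemma Q_convex:
  assumes n1: "1 \<le> n" and m1: "1 \<le> m" and a0: "0 \<le> a" and ab: "a < b" and c0: "0 \<le> c"
    and al: "\<alpha> > 0" and be: "\<beta> > 0" and mab: "real m * \<alpha> \<le> \<beta>"
  shows "convex (Qset n m a b c d \<alpha> \<beta>)"
proof (rule convexI)
  fix z1 z2 and u v :: real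
  assume z1: "z1 \<in> Qset n m a b c d \<alpha> \<beta>" and z2: "z2 \<in> Qset n m a b c d \<alpha> \<beta>"
    and uv: "0 \<le> u" "0 \<le> v" "u + v = 1"
  obtain x1 y1 where e1: "z1 = (x1, y1)" by (cases z1)
  obtain x2 y2 where e2: "z2 = (x2, y2)" by (cases z2)
  have H1: "(x1, y1) \<in> boxH n m a b c d" and Q1: "pu n a b (sumS n a x1) powr (\<beta> / (real m * \<alpha>)) \<le> GM m y1"
    using z1 e1 by (auto simp: Q_iff)
  have H2: "(x2, y2) \<in> boxH n m a b c d" and Q2: "pu n a b (sumS n a x2) powr (\<beta> / (real m * \<alpha>)) \<le> GM m y2"
    using z2 e2 by (auto simp: Q_iff)
  note B1 = boxH_inbox[OF H1] and B2 = boxH_inbox[OF H2]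
  let ?g = "\<beta> / (real m * \<alpha>)"
  have g1: "1 \<le> ?g" using mab m1 al by simp
  have vu: "v = 1 - u" using uv by simp
  let ?x = "u *\<^sub>R x1 + v *\<^sub>R x2" and ?y = "u *\<^sub>R y1 + v *\<^sub>R y2"
  have Hx: "(?x, ?y) \<in> boxH n m a b c d"
    using B1 B2 uv unfolding boxH_def inbox_def
    by (auto intro!: isvec_comb cb_ge convex_bound_le)
  have r1: "0 \<le> sumS n a x1" "sumS n a x1 \<le> real n * (b - a)" using sumS_range B1 by blast+
  have r2: "0 \<le> sumS n a x2" "sumS n a x2 \<le> real n * (b - a)" using sumS_range B2 by blast+
  have p1: "0 \<le> pu n a b (sumS n a x1)" by (rule pu_nonneg[OF ab a0 n1 r1])
  have p2: "0 \<le> pu n a b (sumS n a x2)" by (rule pu_nonneg[OF ab a0 n1 r2])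
  have s: "sumS n a ?x = u * sumS n a x1 + (1 - u) * sumS n a x2"
    using sumS_comb[OF uv(3)] vu by simp
  have u1: "u \<le> 1" using uv by simp
  have "pu n a b (sumS n a ?x) \<le> u * pu n a b (sumS n a x1) + (1 - u) * pu n a b (sumS n a x2)"
    unfolding s by (rule pu_convex[OF ab a0 n1 r1 r2 uv(1) u1])
  moreover have "0 \<le> pu n a b (sumS n a ?x)"
    using pu_nonneg[OF ab a0 n1] sumS_range[of n a b ?x] Hx boxH_inbox by blast
  ultimately have "pu n a b (sumS n a ?x) powr ?g \<le> (u * pu n a b (sumS n a x1) + (1 - u) * pu n a b (sumS n a x2)) powr ?g"
    using g1 by (intro powr_mono2) auto
  also have "\<dots> \<le> u * pu n a b (sumS n a x1) powr ?g + (1 - u) * pu n a b (sumS n a x2) powr ?g"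
    by (rule powr_cvx[OF p1 p2 uv(1) u1 g1])
  also have "\<dots> \<le> u * GM m y1 + (1 - u) * GM m y2"
    using Q1 Q2 uv by (intro add_mono mult_left_mono) auto
  also have "\<dots> \<le> GM m (u *\<^sub>R y1 + (1 - u) *\<^sub>R y2)"
  proof (rule GM_concave[OF m1 _ _ uv(1) u1])
    fix i assume "i \<in> {1..m}"
    then show "0 \<le> y1 i" "0 \<le> y2 i" using B1 B2 c0 by (auto simp: inbox_def intro: order_trans)
  qed
  finally have "pu n a b (sumS n a ?x) powr ?g \<le> GM m ?y" using vu by simp
  then show "u *\<^sub>R z1 + v *\<^sub>R z2 \<in> Qset n m a b c d \<alpha> \<beta>"
    unfolding e1 e2 using Hx by (simp add: Q_iff)
qed

lemma part2:
  assumes n1: "1 \<le> n" and m1: "1 \<le> m" and a0: "0 \<le> a" and ab: "a < b" and c0: "0 \<le> c"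
    and al: "\<alpha> > 0" and be: "\<beta> > 0" and mab: "real m * \<alpha> \<le> \<beta>"
  shows "convex hull (setS n m a b c d \<alpha> \<beta>) = Qset n m a b c d \<alpha> \<beta>"
proof
  show "convex hull setS n m a b c d \<alpha> \<beta> \<subseteq> Qset n m a b c d \<alpha> \<beta>"
  proof (rule hull_minimal)
    show "setS n m a b c d \<alpha> \<beta> \<subseteq> Qset n m a b c d \<alpha> \<beta>"
      using S_sub_Q[OF n1 m1 a0 ab al be] by auto
    show "convex (Qset n m a b c d \<alpha> \<beta>)" by (rule Q_convex[OF n1 m1 a0 ab c0 al be mab])
  qed
  show "Qset n m a b c d \<alpha> \<beta> \<subseteq> convex hull setS n m a b c d \<alpha> \<beta>"
    using Q_sub_conv[OF n1 m1 a0 ab al be] by auto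
qed

theorem mainTheorem17:
  fixes n m :: nat and a b c d \<alpha> \<beta> :: real
  assumes "1 \<le> n" and "1 \<le> m"
    and "0 \<le> a" and "a < b" and "0 \<le> c" and "c < d"
    and "\<alpha> > 0" and "\<beta> > 0"
  defines "k \<equiv> min m (nat \<lfloor>\<beta> / \<alpha>\<rfloor>)"
  defines "T \<equiv> (\<Union>i\<in>{0..m-k}. \<Union>j\<in>{0..n-1}. setSij n m a b c d \<alpha> \<beta> k i j)
                \<union> (\<Union>j\<in>{0..n}. setC n m a b c d \<alpha> \<beta> j)"
  shows "convex hull (setS n m a b c d \<alpha> \<beta>) =
           {(x, y). isvec n x \<and> isvec m y \<and>
              (\<exists>u v. majorizes m v y \<and> majorizes n u x \<and> isvec n u \<and> isvec m v \<and>
                     (u, v) \<in> convex hull T)} \<and>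
         (real m * \<alpha> \<le> \<beta> \<longrightarrow>
         convex hull (setS n m a b c d \<alpha> \<beta>) =
           {(x, y) \<in> boxH n m a b c d.
              (\<Prod>i=1..m. y i powr (1 / real m)) \<ge>
              (\<Prod>j=1..n. (ustar n a b (sumS n a x) j) powr (\<beta> / (real m * \<alpha>)))})"
proof
  have TT: "T = Tset n m a b c d \<alpha> \<beta> k" by (simp add: T_def Tset_def)
  show "convex hull (setS n m a b c d \<alpha> \<beta>) =
           {(x, y). isvec n x \<and> isvec m y \<and>
              (\<exists>u v. majorizes m v y \<and> majorizes n u x \<and> isvec n u \<and> isvec m v \<and>
                     (u, v) \<in> convex hull T)}"
    using part1[OF assms(1-8) k_def[THEN meta_eq_to_obj_eq]] unfolding TT Rset_def by simp
  show "real m * \<alpha> \<le> \<beta> \<longrightarrow>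
         convex hull (setS n m a b c d \<alpha> \<beta>) =
           {(x, y) \<in> boxH n m a b c d.
              (\<Prod>i=1..m. y i powr (1 / real m)) \<ge>
              (\<Prod>j=1..n. (ustar n a b (sumS n a x) j) powr (\<beta> / (real m * \<alpha>)))}"
    using part2[OF assms(1-5) assms(7,8)] unfolding Qset_def by simp
qed


end
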